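(* Let $m,n\ge4$ and $N=n+m-4$. Then $I_{C_N}=I_{P'_m}\times_{Q_{m,n}}I_{P_n}$, where the variable $z_S$ ($S$ a collider set of $C_N$) is identified with the variable $z_{(S\cap\{n,n+1,\dots,N,1\},\ S\cap\{2,\dots,n-1\})}$.
   Context: A DAG $\mathcal{G}$ on a vertex set $V$ has parent sets $\mathrm{pa}_{\mathcal{G}}(i)$; its characteristic imset assigns to $S\subseteq V$, $|S|\ge2$, the value $1$ if some $i\in S$ has $S\setminus\{i\}\subseteq\mathrm{pa}_{\mathcal{G}}(i)$, else $0$. A v-structure is $i\to k\leftarrow j$ with $i,j$ non-adjacent, and two DAGs are Markov equivalent iff they have the same skeleton and v-structures (equivalently the same characteristic imset). For an undirected graph $G$, $I_G$ is the kernel of the map sending a variable indexed by a Markov equivalence class with skeleton $G$ to $\prod_{S:c(S)=1}t_S$, where $c$ is the characteristic imset of any DAG in the class. $P_n$ is the path $1-2-\cdots-n$. Markov equivalence classes with skeleton $P_n$ are indexed by their collider sets $S\subseteq\{2,\dots,n-1\}$ containing no two consecutive integers (the set of $k$ with a v-structure $k-1\to k\leftarrow k+1$); $I_{P_n}\subseteq\mathbb{K}[y_S]$. $P'_m$ is the path with vertices $n-1,n,n+1,\dots,N,1,2$ in this order; its classes are indexed by sets $S'$ of interior vertices (from $n,\dots,N,1$) containing no two vertices consecutive along this path; $I_{P'_m}\subseteq\mathbb{K}[x_{S'}]$. $C_N$ is the cycle $1-2-\cdots-N-1$; its classes are indexed by nonempty $S\subseteq[N]$ with no two cyclically consecutive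 elements modulo $N$, and $I_{C_N}\subseteq\mathbb{K}[z_S]$. $Q_{m,n}$ is the set of pairs $(S',S)$ (collider sets of $P'_m$ and $P_n$) such that no two elements of $S'\cup S$ are cyclically consecutive modulo $N$, and $S'\cup S\neq\emptyset$. For $Q\subseteq R_1\times R_2$, $\phi_Q:\mathbb{K}[z_{(a,b)}:(a,b)\in Q]\to\mathbb{K}[x_a,y_b]$ is $z_{(a,b)}\mapsto x_ay_b$, and $I\times_QJ:=\phi_Q^{-1}(I+J)$. *)

theory Defs
  imports Main "HOL-Library.Poly_Mapping"
begin

type_synonym ('v,'k) mpoly = "('v \<Rightarrow>\<^sub>0 nat) \<Rightarrow>\<^sub>0 'k"

definition mvar :: "'v \<Rightarrow> ('v,'k::comm_semiring_1) mpoly" where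
  "mvar v = Poly_Mapping.single (Poly_Mapping.single v 1) 1"

definition polys_in :: "'v set \<Rightarrow> ('v,'k::zero) mpoly set" where
  "polys_in X = {p :: ('v,'k) mpoly. \<forall>m\<in>Poly_Mapping.keys p. Poly_Mapping.keys m \<subseteq> X}"

definition msubst :: "('v \<Rightarrow> ('w,'k::comm_semiring_1) mpoly) \<Rightarrow> ('v,'k) mpoly \<Rightarrow> ('w,'k) mpoly" where
  "msubst \<sigma> p = (\<Sum>m\<in>Poly_Mapping.keys p. Poly_Mapping.single 0 (Poly_Mapping.lookup p m) * (\<Prod>v\<in>Poly_Mapping.keys m. \<sigma> v ^ Poly_Mapping.lookup m v))"

definition ideal_gen :: "'a::comm_ring_1 set \<Rightarrow> 'a set" where
  "ideal_gen A = {\<Sum>a\<in>F. c a * a | F c. finite F \<and> F \<subseteq> A}"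

text \<open>A DAG on vertex set V is a set of arcs (i,j), meaning i \<rightarrow> j, without directed cycles.\<close>
definition is_dag :: "nat set \<Rightarrow> (nat \<times> nat) set \<Rightarrow> bool" where
  "is_dag V D \<longleftrightarrow> D \<subseteq> V \<times> V \<and> acyclic D"

definition pa :: "(nat \<times> nat) set \<Rightarrow> nat \<Rightarrow> nat set" where
  "pa D i = {j. (j, i) \<in> D}"

definition skel :: "(nat \<times> nat) set \<Rightarrow> nat set set" where
  "skel D = {{i, j} | i j. (i, j) \<in> D}"

definition vstruct :: "(nat \<times> nat) set \<Rightarrow> nat \<Rightarrow> nat \<Rightarrow> nat \<Rightarrow> bool" where
  "vstruct D i k j \<longleftrightarrow> (i, k) \<in> D \<and> (j, k) \<in> D \<and> i \<noteq> j \<and> (i, j) \<notin> D \<and> (j, i) \<notin> D"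

definition colliders :: "(nat \<times> nat) set \<Rightarrow> nat set" where
  "colliders D = {k. \<exists>i j. vstruct D i k j}"

definition charimset :: "(nat \<times> nat) set \<Rightarrow> nat set \<Rightarrow> bool" where
  "charimset D S \<longleftrightarrow> 2 \<le> card S \<and> (\<exists>i\<in>S. S - {i} \<subseteq> pa D i)"

text \<open>A DAG in the Markov equivalence class with skeleton E and collider set S
  (for paths and cycles the classes are indexed by collider sets).\<close>
definition class_dag :: "nat set \<Rightarrow> nat set set \<Rightarrow> nat set \<Rightarrow> (nat \<times> nat) set" where
  "class_dag V E S = (SOME D. is_dag V D \<and> skel D = E \<and> colliders D = S)"

definition imset_mono :: "nat set \<Rightarrow> nat set set \<Rightarrow> nat set \<Rightarrow> (nat set,'k::comm_semiring_1) mpoly" where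
  "imset_mono V E S = (\<Prod>T\<in>{T. T \<subseteq> V \<and> charimset (class_dag V E S) T}. mvar T)"

definition IG :: "nat set \<Rightarrow> nat set set \<Rightarrow> nat set set \<Rightarrow> (nat set,'k::field) mpoly set" where
  "IG V E C = {p \<in> polys_in C. msubst (imset_mono V E) p = 0}"

definition Pn_V :: "nat \<Rightarrow> nat set" where "Pn_V n = {1..n}"
definition Pn_E :: "nat \<Rightarrow> nat set set" where "Pn_E n = {{i, i+1} | i. 1 \<le> i \<and> i < n}"
definition Pn_C :: "nat \<Rightarrow> nat set set" where
  "Pn_C n = {S. S \<subseteq> {2..n-1} \<and> (\<forall>i. \<not> (i \<in> S \<and> i+1 \<in> S))}"

text \<open>P'_m: path n-1 - n - ... - N - 1 - 2.\<close>
definition Pp_V :: "nat \<Rightarrow> nat \<Rightarrow> nat set" where "Pp_V n N = {n-1..N} \<union> {1, 2}"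
definition Pp_E :: "nat \<Rightarrow> nat \<Rightarrow> nat set set" where
  "Pp_E n N = {{k, k+1} | k. n-1 \<le> k \<and> k < N} \<union> {{N, 1}, {1, 2}}"
definition Pp_C :: "nat \<Rightarrow> nat \<Rightarrow> nat set set" where
  "Pp_C n N = {S. S \<subseteq> {n..N} \<union> {1} \<and> (\<forall>k. n-1 \<le> k \<and> k < N \<longrightarrow> \<not> (k \<in> S \<and> k+1 \<in> S))
                 \<and> \<not> (N \<in> S \<and> 1 \<in> S) \<and> \<not> (1 \<in> S \<and> 2 \<in> S)}"

definition cyc_noncons :: "nat \<Rightarrow> nat set \<Rightarrow> bool" where
  "cyc_noncons N S \<longleftrightarrow> (\<forall>i. 1 \<le> i \<and> i < N \<longrightarrow> \<not> (i \<in> S \<and> i+1 \<in> S)) \<and> \<not> (N \<in> S \<and> 1 \<in> S)"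

definition CN_V :: "nat \<Rightarrow> nat set" where "CN_V N = {1..N}"
definition CN_E :: "nat \<Rightarrow> nat set set" where
  "CN_E N = {{i, i+1} | i. 1 \<le> i \<and> i < N} \<union> {{N, 1}}"
definition CN_C :: "nat \<Rightarrow> nat set set" where
  "CN_C N = {S. S \<noteq> {} \<and> S \<subseteq> {1..N} \<and> cyc_noncons N S}"

definition Qmn :: "nat \<Rightarrow> nat \<Rightarrow> (nat set \<times> nat set) set" where
  "Qmn n N = {(S', S). S' \<in> Pp_C n N \<and> S \<in> Pn_C n \<and> cyc_noncons N (S' \<union> S) \<and> S' \<union> S \<noteq> {}}"

text \<open>I \<times>_Q J = phi_Q^{-1}(I + J), phi_Q : K[z_q : q \<in> Q] \<rightarrow> K[x_a, y_b], z_(a,b) \<mapsto> x_a y_b.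
  Variables x_a are Inl a, y_b are Inr b; I + J is the ideal of K[x,y] generated by I and J.\<close>
definition fiber_prod :: "('a \<times> 'b) set \<Rightarrow> ('a,'k::field) mpoly set \<Rightarrow> ('b,'k) mpoly set \<Rightarrow> ('a \<times> 'b,'k) mpoly set" where
  "fiber_prod Q I J = {p \<in> polys_in Q.
     msubst (\<lambda>(a, b). mvar (Inl a) * mvar (Inr b)) p
       \<in> ideal_gen (msubst (\<lambda>a. mvar (Inl a)) ` I \<union> msubst (\<lambda>b. mvar (Inr b)) ` J)}"

end

theory Submission
  imports Defs
begin

definition mmono :: "('v \<Rightarrow> ('w,'k::comm_semiring_1) mpoly) \<Rightarrow> ('v \<Rightarrow>\<^sub>0 nat) \<Rightarrow> ('w,'k) mpoly" where
  "mmono \<sigma> m = (\<Prod>v\<in>Poly_Mapping.keys m. \<sigma> v ^ Poly_Mapping.lookup m v)"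

lemma msubst_alt: "msubst \<sigma> p = (\<Sum>m\<in>Poly_Mapping.keys p. Poly_Mapping.single 0 (Poly_Mapping.lookup p m) * mmono \<sigma> m)"
  by (simp add: msubst_def mmono_def)

lemma mono_superset:
  assumes "finite K" "Poly_Mapping.keys m \<subseteq> K"
  shows "mmono \<sigma> m = (\<Prod>v\<in>K. \<sigma> v ^ Poly_Mapping.lookup m v)"
  unfolding mmono_def
  by (rule prod.mono_neutral_left) (use assms in \<open>auto simp: in_keys_iff\<close>)

lemma mono_zero [simp]: "mmono \<sigma> 0 = 1"
  by (simp add: mmono_def)

lemma mono_add: "mmono \<sigma> (a + b) = mmono \<sigma> a * mmono \<sigma> b"
proof -
  let ?K = "Poly_Mapping.keys a \<union> Poly_Mapping.keys b"
  have k: "Poly_Mapping.keys (a+b) \<subseteq> ?K" by (rule keys_add)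
  have "mmono \<sigma> (a+b) = (\<Prod>v\<in>?K. \<sigma> v ^ Poly_Mapping.lookup (a+b) v)"
    by (rule mono_superset) (use k in auto)
  also have "\<dots> = (\<Prod>v\<in>?K. \<sigma> v ^ Poly_Mapping.lookup a v * \<sigma> v ^ Poly_Mapping.lookup b v)"
    by (simp add: lookup_add power_add)
  also have "\<dots> = mmono \<sigma> a * mmono \<sigma> b"
    by (simp add: prod.distrib mono_superset[of ?K a] mono_superset[of ?K b])
  finally show ?thesis .
qed

lemma msubst_superset:
  assumes "finite K" "Poly_Mapping.keys p \<subseteq> K"
  shows "msubst \<sigma> p = (\<Sum>m\<in>K. Poly_Mapping.single 0 (Poly_Mapping.lookup p m) * mmono \<sigma> m)"
  unfolding msubst_alt
  by (rule sum.mono_neutral_left) (use assms in \<open>auto simp: in_keys_iff\<close>)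

lemma msubst_zero [simp]: "msubst \<sigma> 0 = 0"
  by (simp add: msubst_def)

lemma msubst_add: "msubst \<sigma> (p + q) = msubst \<sigma> p + msubst \<sigma> q"
proof -
  let ?K = "Poly_Mapping.keys p \<union> Poly_Mapping.keys q"
  have k: "Poly_Mapping.keys (p+q) \<subseteq> ?K" by (rule keys_add)
  show ?thesis
    by (simp add: msubst_superset[of ?K "p+q"] msubst_superset[of ?K p] msubst_superset[of ?K q] k
        lookup_add single_add distrib_right sum.distrib)
qed

lemma msubst_single: "msubst \<sigma> (Poly_Mapping.single m c) = Poly_Mapping.single 0 c * mmono \<sigma> m"
  by (simp add: msubst_alt)

lemma msubst_sum: "msubst \<sigma> (\<Sum>i\<in>I. f i) = (\<Sum>i\<in>I. msubst \<sigma> (f i))"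
  by (induction I rule: infinite_finite_induct) (simp_all add: msubst_add)

lemma poly_expand: "p = (\<Sum>m\<in>Poly_Mapping.keys p. Poly_Mapping.single m (Poly_Mapping.lookup p m))"
proof (rule poly_mapping_eqI)
  fix k
  have "Poly_Mapping.lookup (\<Sum>m\<in>Poly_Mapping.keys p. Poly_Mapping.single m (Poly_Mapping.lookup p m)) k
      = (\<Sum>m\<in>Poly_Mapping.keys p. (Poly_Mapping.lookup p m when m = k))"
    by (simp add: lookup_sum lookup_single)
  also have "\<dots> = Poly_Mapping.lookup p k"
    by (cases "k \<in> Poly_Mapping.keys p") (auto simp: when_def in_keys_iff sum.delta)
  finally show "Poly_Mapping.lookup p k = Poly_Mapping.lookup (\<Sum>m\<in>Poly_Mapping.keys p. Poly_Mapping.single m (Poly_Mapping.lookup p m)) k" by simp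
qed

lemma msubst_mult: "msubst \<sigma> (p * q) = msubst \<sigma> p * msubst \<sigma> q"
proof -
  have "p * q = (\<Sum>a\<in>Poly_Mapping.keys p. \<Sum>b\<in>Poly_Mapping.keys q.
          Poly_Mapping.single a (Poly_Mapping.lookup p a) * Poly_Mapping.single b (Poly_Mapping.lookup q b))"
    by (subst poly_expand[of p], subst poly_expand[of q]) (simp add: sum_product)
  hence "msubst \<sigma> (p*q) = (\<Sum>a\<in>Poly_Mapping.keys p. \<Sum>b\<in>Poly_Mapping.keys q.
          (Poly_Mapping.single 0 (Poly_Mapping.lookup p a) * mmono \<sigma> a) * (Poly_Mapping.single 0 (Poly_Mapping.lookup q b) * mmono \<sigma> b))"
    by (simp add: msubst_sum mult_single msubst_single mono_add mult_ac)
  also have "\<dots> = msubst \<sigma> p * msubst \<sigma> q"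
    by (simp add: msubst_alt sum_product)
  finally show ?thesis .
qed

lemma msubst_one [simp]: "msubst \<sigma> 1 = 1"
  by (metis msubst_single mono_zero mult.right_neutral single_one)

lemma msubst_const [simp]: "msubst \<sigma> (Poly_Mapping.single 0 c) = Poly_Mapping.single 0 c"
  by (simp add: msubst_single)

lemma msubst_uminus: "msubst \<sigma> (- p) = - msubst \<sigma> (p :: ('v,'k::comm_ring_1) mpoly)"
  by (metis add.right_inverse add_eq_0_iff msubst_add msubst_zero)

lemma msubst_diff: "msubst \<sigma> (p - q) = msubst \<sigma> p - msubst \<sigma> (q :: ('v,'k::comm_ring_1) mpoly)"
  by (metis diff_conv_add_uminus msubst_add msubst_uminus)

lemma msubst_power: "msubst \<sigma> (p ^ k) = msubst \<sigma> p ^ k"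
  by (induction k) (simp_all add: msubst_mult)

lemma msubst_prod: "msubst \<sigma> (\<Prod>i\<in>I. f i) = (\<Prod>i\<in>I. msubst \<sigma> (f i))"
  by (induction I rule: infinite_finite_induct) (simp_all add: msubst_mult)

lemma msubst_mvar [simp]: "msubst \<sigma> (mvar v) = \<sigma> v"
  by (simp add: mvar_def msubst_single mmono_def)

lemma msubst_mono: "msubst \<sigma> (mmono \<tau> m) = mmono (\<lambda>v. msubst \<sigma> (\<tau> v)) m"
  by (simp add: mmono_def msubst_prod msubst_power)

lemma msubst_msubst: "msubst \<sigma> (msubst \<tau> p) = msubst (\<lambda>v. msubst \<sigma> (\<tau> v)) p"
  by (simp add: msubst_alt[of \<tau>] msubst_alt[of "\<lambda>v. msubst \<sigma> (\<tau> v)"] msubst_sum msubst_mult msubst_mono)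

lemma mono_cong: "(\<And>v. v \<in> Poly_Mapping.keys m \<Longrightarrow> \<sigma> v = \<tau> v) \<Longrightarrow> mmono \<sigma> m = mmono \<tau> m"
  by (simp add: mmono_def)

lemma msubst_cong:
  "(\<And>m v. m \<in> Poly_Mapping.keys p \<Longrightarrow> v \<in> Poly_Mapping.keys m \<Longrightarrow> \<sigma> v = \<tau> v) \<Longrightarrow> msubst \<sigma> p = msubst \<tau> p"
  unfolding msubst_alt by (intro sum.cong refl arg_cong2[where f="(*)"] mono_cong) auto

lemma mono_mult_distrib: "mmono (\<lambda>v. \<sigma> v * \<tau> v) m = mmono \<sigma> m * mmono \<tau> m"
  by (simp add: mmono_def power_mult_distrib prod.distrib)

definition gmono :: "'w set \<Rightarrow> ('w,'k::comm_semiring_1) mpoly" where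
  "gmono G = (\<Prod>T\<in>G. mvar T)"

lemma prod_single_one:
  "(\<Prod>x\<in>A. Poly_Mapping.single (f x) (1::'k::comm_semiring_1)) = Poly_Mapping.single (\<Sum>x\<in>A. f x) 1"
  by (induction A rule: infinite_finite_induct) (simp_all add: mult_single)

lemma single_power_one:
  "Poly_Mapping.single e (1::'k::comm_semiring_1) ^ k = Poly_Mapping.single (\<Sum>i<k. e) 1"
  by (induction k) (simp_all add: mult_single add.commute)

lemma mono_monomial:
  assumes "\<And>v. v \<in> Poly_Mapping.keys m \<Longrightarrow> \<sigma> v = Poly_Mapping.single (e v) (1::'k::comm_semiring_1)"
  shows "mmono \<sigma> m = Poly_Mapping.single (\<Sum>v\<in>Poly_Mapping.keys m. \<Sum>i<Poly_Mapping.lookup m v. e v) 1"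
proof -
  have "mmono \<sigma> m = (\<Prod>v\<in>Poly_Mapping.keys m. Poly_Mapping.single (e v) (1::'k) ^ Poly_Mapping.lookup m v)"
    unfolding mmono_def by (rule prod.cong) (simp_all add: assms)
  also have "\<dots> = Poly_Mapping.single (\<Sum>v\<in>Poly_Mapping.keys m. \<Sum>i<Poly_Mapping.lookup m v. e v) 1"
    by (simp add: single_power_one prod_single_one)
  finally show ?thesis .
qed

lemma lookup_sum_rep:
  "Poly_Mapping.lookup (\<Sum>v\<in>K. \<Sum>i<k v. (e v :: 'w \<Rightarrow>\<^sub>0 nat)) T = (\<Sum>v\<in>K. k v * Poly_Mapping.lookup (e v) T)"
  unfolding lookup_sum by (intro sum.cong refl) simp

lemma gmono_single:
  "gmono G = Poly_Mapping.single (\<Sum>T\<in>G. Poly_Mapping.single T 1) (1::'k::comm_semiring_1)"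
  unfolding gmono_def mvar_def by (rule prod_single_one)

lemma lookup_ind:
  "finite G \<Longrightarrow> Poly_Mapping.lookup (\<Sum>T\<in>G. Poly_Mapping.single T (1::nat)) U = (if U \<in> G then 1 else 0)"
  by (simp add: lookup_sum lookup_single when_def)

lemma single_one_inj:
  "Poly_Mapping.single a (1::'k::comm_semiring_1) = Poly_Mapping.single b 1 \<Longrightarrow> a = b"
proof (rule ccontr)
  assume h: "Poly_Mapping.single a (1::'k) = Poly_Mapping.single b 1" "a \<noteq> b"
  have "Poly_Mapping.lookup (Poly_Mapping.single a (1::'k)) a = Poly_Mapping.lookup (Poly_Mapping.single b 1) a"
    using h(1) by simp
  thus False using h(2) by (simp add: lookup_single when_def)
qed

lemma mono_gmono:
  assumes "\<And>v. v \<in> Poly_Mapping.keys m \<Longrightarrow> \<sigma> v = gmono (G v) \<and> finite (G v)"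
  shows "\<exists>\<mu>. mmono \<sigma> m = Poly_Mapping.single \<mu> (1::'k::comm_semiring_1) \<and>
     (\<forall>T. Poly_Mapping.lookup \<mu> T = (\<Sum>v\<in>Poly_Mapping.keys m. Poly_Mapping.lookup m v * (if T \<in> G v then 1 else 0)))"
proof -
  have "mmono \<sigma> m = Poly_Mapping.single (\<Sum>v\<in>Poly_Mapping.keys m. \<Sum>i<Poly_Mapping.lookup m v. (\<Sum>T\<in>G v. Poly_Mapping.single T 1)) (1::'k)"
    by (rule mono_monomial) (simp add: assms gmono_single)
  moreover have "\<forall>T. Poly_Mapping.lookup (\<Sum>v\<in>Poly_Mapping.keys m. \<Sum>i<Poly_Mapping.lookup m v. (\<Sum>T\<in>G v. Poly_Mapping.single T (1::nat))) T
      = (\<Sum>v\<in>Poly_Mapping.keys m. Poly_Mapping.lookup m v * (if T \<in> G v then 1 else 0))"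
    unfolding lookup_sum_rep by (intro allI sum.cong refl) (simp add: assms lookup_sum lookup_single when_def)
  ultimately show ?thesis by blast
qed

lemma mono_transfer:
  assumes G1: "\<And>v. v \<in> X \<Longrightarrow> \<sigma>1 v = gmono (G1 v) \<and> finite (G1 v)"
    and G2: "\<And>v. v \<in> X \<Longrightarrow> \<sigma>2 v = gmono (G2 v) \<and> finite (G2 v)"
    and cond: "\<And>T. (\<forall>v\<in>X. T \<notin> G1 v) \<or> (\<exists>T2. \<forall>v\<in>X. (T \<in> G1 v) = (T2 \<in> G2 v))"
    and km: "Poly_Mapping.keys m \<subseteq> X" and km': "Poly_Mapping.keys m' \<subseteq> X"
    and eq: "mmono \<sigma>2 m = mmono (\<sigma>2 :: _ \<Rightarrow> ('w,'k::comm_semiring_1) mpoly) m'"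
  shows "mmono \<sigma>1 m = (mmono \<sigma>1 m' :: ('w,'k) mpoly)"
proof -
  obtain \<mu>1 where \<mu>1: "mmono \<sigma>1 m = Poly_Mapping.single \<mu>1 (1::'k)"
    "\<forall>T. Poly_Mapping.lookup \<mu>1 T = (\<Sum>v\<in>Poly_Mapping.keys m. Poly_Mapping.lookup m v * (if T \<in> G1 v then 1 else 0))"
    using mono_gmono[of m \<sigma>1 G1] G1 km by blast
  obtain \<mu>1' where \<mu>1': "mmono \<sigma>1 m' = Poly_Mapping.single \<mu>1' (1::'k)"
    "\<forall>T. Poly_Mapping.lookup \<mu>1' T = (\<Sum>v\<in>Poly_Mapping.keys m'. Poly_Mapping.lookup m' v * (if T \<in> G1 v then 1 else 0))"
    using mono_gmono[of m' \<sigma>1 G1] G1 km' by blast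
  obtain \<mu>2 where \<mu>2: "mmono \<sigma>2 m = Poly_Mapping.single \<mu>2 (1::'k)"
    "\<forall>T. Poly_Mapping.lookup \<mu>2 T = (\<Sum>v\<in>Poly_Mapping.keys m. Poly_Mapping.lookup m v * (if T \<in> G2 v then 1 else 0))"
    using mono_gmono[of m \<sigma>2 G2] G2 km by blast
  obtain \<mu>2' where \<mu>2': "mmono \<sigma>2 m' = Poly_Mapping.single \<mu>2' (1::'k)"
    "\<forall>T. Poly_Mapping.lookup \<mu>2' T = (\<Sum>v\<in>Poly_Mapping.keys m'. Poly_Mapping.lookup m' v * (if T \<in> G2 v then 1 else 0))"
    using mono_gmono[of m' \<sigma>2 G2] G2 km' by blast
  have "\<mu>2 = \<mu>2'" using eq \<mu>2(1) \<mu>2'(1) single_one_inj by metis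
  have "\<mu>1 = \<mu>1'"
  proof (rule poly_mapping_eqI)
    fix T
    show "Poly_Mapping.lookup \<mu>1 T = Poly_Mapping.lookup \<mu>1' T"
    proof (cases "\<forall>v\<in>X. T \<notin> G1 v")
      case True
      have z1: "(\<Sum>v\<in>Poly_Mapping.keys m. Poly_Mapping.lookup m v * (if T \<in> G1 v then 1 else 0)) = 0"
        using True km by (intro sum.neutral) auto
      have z2: "(\<Sum>v\<in>Poly_Mapping.keys m'. Poly_Mapping.lookup m' v * (if T \<in> G1 v then 1 else 0)) = 0"
        using True km' by (intro sum.neutral) auto
      show ?thesis by (simp only: \<mu>1(2)[rule_format] \<mu>1'(2)[rule_format] z1 z2)
    next
      case False
      then obtain T2 where T2: "\<forall>v\<in>X. (T \<in> G1 v) = (T2 \<in> G2 v)" using cond by blast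
      have "Poly_Mapping.lookup \<mu>1 T = Poly_Mapping.lookup \<mu>2 T2"
        using \<mu>1(2) \<mu>2(2) T2 km by (auto intro!: sum.cong)
      moreover have "Poly_Mapping.lookup \<mu>1' T = Poly_Mapping.lookup \<mu>2' T2"
        using \<mu>1'(2) \<mu>2'(2) T2 km' by (auto intro!: sum.cong)
      ultimately show ?thesis using \<open>\<mu>2 = \<mu>2'\<close> by simp
    qed
  qed
  then show ?thesis using \<mu>1 \<mu>1' by simp
qed

lemma polys_in_zero [simp]: "0 \<in> polys_in X"
  by (simp add: polys_in_def)

lemma polys_in_const: "Poly_Mapping.single 0 c \<in> polys_in X"
  by (simp add: polys_in_def)

lemma polys_in_one: "1 \<in> polys_in X"
  by (metis polys_in_const single_one)

lemma polys_in_add: "p \<in> polys_in X \<Longrightarrow> q \<in> polys_in X \<Longrightarrow> p + q \<in> polys_in X"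
  using keys_add[of p q] unfolding polys_in_def by blast

lemma polys_in_mult: "p \<in> polys_in X \<Longrightarrow> q \<in> polys_in X \<Longrightarrow> p * q \<in> polys_in X"
  unfolding polys_in_def
proof safe
  fix m v assume p: "\<forall>m\<in>Poly_Mapping.keys p. Poly_Mapping.keys m \<subseteq> X"
    and q: "\<forall>m\<in>Poly_Mapping.keys q. Poly_Mapping.keys m \<subseteq> X"
    and m: "m \<in> Poly_Mapping.keys (p * q)" and v: "v \<in> Poly_Mapping.keys m"
  obtain a b where "m = a + b" "a \<in> Poly_Mapping.keys p" "b \<in> Poly_Mapping.keys q"
    using keys_mult m by blast
  then show "v \<in> X" using p q v keys_add[of a b] by blast
qed

lemma polys_in_uminus: "p \<in> polys_in X \<Longrightarrow> - p \<in> polys_in X"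
  by (simp add: polys_in_def)

lemma polys_in_diff: "p \<in> polys_in X \<Longrightarrow> q \<in> polys_in X \<Longrightarrow> p - q \<in> polys_in (X::'v set)"
  for p q :: "('v,'k::comm_ring_1) mpoly"
  unfolding diff_conv_add_uminus by (intro polys_in_add polys_in_uminus)

lemma polys_in_power: "p \<in> polys_in X \<Longrightarrow> p ^ k \<in> polys_in X"
  by (induction k) (simp_all add: polys_in_one polys_in_mult)

lemma polys_in_prod: "(\<And>i. i \<in> I \<Longrightarrow> f i \<in> polys_in X) \<Longrightarrow> (\<Prod>i\<in>I. f i) \<in> polys_in X"
  by (induction I rule: infinite_finite_induct) (simp_all add: polys_in_one polys_in_mult)

lemma polys_in_sum: "(\<And>i. i \<in> I \<Longrightarrow> f i \<in> polys_in X) \<Longrightarrow> (\<Sum>i\<in>I. f i) \<in> polys_in X"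
  by (induction I rule: infinite_finite_induct) (simp_all add: polys_in_add)

lemma polys_in_mvar: "v \<in> X \<Longrightarrow> mvar v \<in> polys_in X"
  by (simp add: polys_in_def mvar_def)

lemma polys_in_mono: "Poly_Mapping.keys m \<subseteq> X \<Longrightarrow> (\<And>v. v \<in> X \<Longrightarrow> \<sigma> v \<in> polys_in Y) \<Longrightarrow> mmono \<sigma> m \<in> polys_in Y"
  unfolding mmono_def by (intro polys_in_prod polys_in_power) auto

lemma msubst_polys_in:
  "p \<in> polys_in X \<Longrightarrow> (\<And>v. v \<in> X \<Longrightarrow> \<sigma> v \<in> polys_in Y) \<Longrightarrow> msubst \<sigma> p \<in> polys_in Y"
  unfolding msubst_alt
  by (intro polys_in_sum polys_in_mult polys_in_const polys_in_mono) (auto simp: polys_in_def, blast)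

lemma polys_in_single: "Poly_Mapping.keys m \<subseteq> X \<Longrightarrow> Poly_Mapping.single m c \<in> polys_in X"
  by (simp add: polys_in_def)

subsection \<open>Monomial maps and their kernels\<close>

lemma lookup_msubst_monomial:
  assumes "\<And>m. m \<in> Poly_Mapping.keys p \<Longrightarrow> mmono \<sigma> m = Poly_Mapping.single (E m) (1::'k::comm_semiring_1)"
  shows "Poly_Mapping.lookup (msubst \<sigma> p) \<mu> = (\<Sum>m\<in>Poly_Mapping.keys p. (Poly_Mapping.lookup p m when E m = \<mu>))"
  unfolding msubst_alt lookup_sum
  by (intro sum.cong refl) (simp add: assms mult_single lookup_single)

lemma kernel_induct:
  fixes \<sigma> :: "'v \<Rightarrow> ('w,'k::comm_ring_1) mpoly"
  assumes mon: "\<And>v. v \<in> X \<Longrightarrow> \<exists>e. \<sigma> v = Poly_Mapping.single e 1"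
    and P0: "P 0" and Padd: "\<And>a b. P a \<Longrightarrow> P b \<Longrightarrow> P (a + b)"
    and Pbin: "\<And>c m m'. Poly_Mapping.keys m \<subseteq> X \<Longrightarrow> Poly_Mapping.keys m' \<subseteq> X \<Longrightarrow> mmono \<sigma> m = mmono \<sigma> m'
       \<Longrightarrow> P (Poly_Mapping.single 0 c * (Poly_Mapping.single m 1 - Poly_Mapping.single m' 1))"
  shows "p \<in> polys_in X \<Longrightarrow> msubst \<sigma> p = 0 \<Longrightarrow> P p"
proof (induction "card (Poly_Mapping.keys p)" arbitrary: p rule: less_induct)
  case less
  define e where "e v = (SOME e. \<sigma> v = Poly_Mapping.single e 1)" for v
  have e: "\<sigma> v = Poly_Mapping.single (e v) 1" if "v \<in> X" for v
    unfolding e_def using someI_ex[OF mon[OF that]] .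
  define E where "E m = (\<Sum>v\<in>Poly_Mapping.keys m. \<Sum>i<Poly_Mapping.lookup m v. e v)" for m :: "'v \<Rightarrow>\<^sub>0 nat"
  have monoE: "mmono \<sigma> m = Poly_Mapping.single (E m) 1" if "Poly_Mapping.keys m \<subseteq> X" for m
    unfolding E_def by (rule mono_monomial) (use e that in auto)
  show ?case
  proof (cases "p = 0")
    case True then show ?thesis using P0 by simp
  next
    case False
    then obtain m0 where m0: "m0 \<in> Poly_Mapping.keys p" by fastforce
    let ?c = "Poly_Mapping.lookup p m0"
    have c0: "?c \<noteq> 0" using m0 by (simp add: in_keys_iff)
    have kX: "Poly_Mapping.keys m \<subseteq> X" if "m \<in> Poly_Mapping.keys p" for m
      using less.prems(1) that by (auto simp: polys_in_def)
    have "Poly_Mapping.lookup (msubst \<sigma> p) (E m0) = (\<Sum>m\<in>Poly_Mapping.keys p. (Poly_Mapping.lookup p m when E m = E m0))"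
      by (rule lookup_msubst_monomial) (use monoE kX in auto)
    hence sum0: "(\<Sum>m\<in>Poly_Mapping.keys p. (Poly_Mapping.lookup p m when E m = E m0)) = 0"
      using less.prems(2) by simp
    have "\<exists>m'\<in>Poly_Mapping.keys p. m' \<noteq> m0 \<and> E m' = E m0"
    proof (rule ccontr)
      assume "\<not> ?thesis"
      hence "(\<Sum>m\<in>Poly_Mapping.keys p - {m0}. (Poly_Mapping.lookup p m when E m = E m0)) = 0"
        by (intro sum.neutral) auto
      hence "(\<Sum>m\<in>Poly_Mapping.keys p. (Poly_Mapping.lookup p m when E m = E m0)) = ?c"
        using m0 by (simp add: sum.remove)
      thus False using sum0 c0 by simp
    qed
    then obtain m' where m': "m' \<in> Poly_Mapping.keys p" "m' \<noteq> m0" "E m' = E m0" by blast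
    define b where "b = Poly_Mapping.single 0 ?c * (Poly_Mapping.single m0 1 - Poly_Mapping.single m' 1)"
    have b_eq: "b = Poly_Mapping.single m0 ?c - Poly_Mapping.single m' ?c"
      by (simp add: b_def right_diff_distrib mult_single)
    define p' where "p' = p - b"
    have lk: "Poly_Mapping.lookup p' k = Poly_Mapping.lookup p k - (?c when m0 = k) + (?c when m' = k)" for k
      by (simp add: p'_def b_eq lookup_minus lookup_single)
    have keys': "Poly_Mapping.keys p' \<subseteq> Poly_Mapping.keys p - {m0}"
    proof
      fix k assume k: "k \<in> Poly_Mapping.keys p'"
      hence "Poly_Mapping.lookup p' k \<noteq> 0" by (simp add: in_keys_iff)
      then show "k \<in> Poly_Mapping.keys p - {m0}"
        using lk[of k] m' by (cases "k = m0"; cases "k = m'") (auto simp: in_keys_iff when_def)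
    qed
    hence card_less: "card (Poly_Mapping.keys p') < card (Poly_Mapping.keys p)"
      using m0 by (intro psubset_card_mono) auto
    have p'_in: "p' \<in> polys_in X"
      using keys' less.prems(1) by (auto simp: polys_in_def)
    have "mmono \<sigma> m0 = mmono \<sigma> m'" using monoE kX m0 m' by metis
    hence "msubst \<sigma> b = 0"
      by (simp add: b_def msubst_mult msubst_diff msubst_single)
    hence "msubst \<sigma> p' = 0" using less.prems(2) by (simp add: p'_def msubst_diff)
    hence "P p'" using less.hyps[OF card_less p'_in] by blast
    moreover have "P b" unfolding b_def
      by (rule Pbin) (use kX m0 m' \<open>mmono \<sigma> m0 = mmono \<sigma> m'\<close> in auto)
    ultimately have "P (p' + b)" by (rule Padd)
    thus ?thesis by (simp add: p'_def)
  qed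
qed

lemma kernel_transfer:
  fixes \<sigma>1 \<sigma>2 :: "'v \<Rightarrow> ('w,'k::comm_ring_1) mpoly"
  assumes mon: "\<And>v. v \<in> X \<Longrightarrow> \<exists>e. \<sigma>2 v = Poly_Mapping.single e 1"
    and tr: "\<And>m m'. Poly_Mapping.keys m \<subseteq> X \<Longrightarrow> Poly_Mapping.keys m' \<subseteq> X \<Longrightarrow> mmono \<sigma>2 m = mmono \<sigma>2 m'
       \<Longrightarrow> mmono \<sigma>1 m = mmono \<sigma>1 m'"
    and "p \<in> polys_in X" "msubst \<sigma>2 p = 0"
  shows "msubst \<sigma>1 p = 0"
proof (rule kernel_induct[OF mon, where P="\<lambda>q. msubst \<sigma>1 q = 0"])
  fix c m m' assume "Poly_Mapping.keys m \<subseteq> X" "Poly_Mapping.keys m' \<subseteq> X" "mmono \<sigma>2 m = mmono \<sigma>2 m'"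
  then have "mmono \<sigma>1 m = mmono \<sigma>1 m'" by (rule tr)
  then show "msubst \<sigma>1 (Poly_Mapping.single 0 c * (Poly_Mapping.single m 1 - Poly_Mapping.single m' 1)) = 0"
    by (simp add: msubst_mult msubst_diff msubst_single)
qed (use assms(3,4) in \<open>simp_all add: msubst_add\<close>)

lemma ideal_gen_zero: "0 \<in> ideal_gen A"
  unfolding ideal_gen_def by (rule CollectI, rule exI[of _ "{}"]) auto

lemma ideal_gen_base: "a \<in> A \<Longrightarrow> a \<in> ideal_gen A"
  unfolding ideal_gen_def by (rule CollectI, rule exI[of _ "{a}"], rule exI[of _ "\<lambda>_. 1"]) auto

lemma ideal_gen_mult: "x \<in> ideal_gen A \<Longrightarrow> r * x \<in> ideal_gen A"
proof -
  assume "x \<in> ideal_gen A"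
  then obtain F c where x: "x = (\<Sum>a\<in>F. c a * a)" "finite F" "F \<subseteq> A" unfolding ideal_gen_def by blast
  have "r * x = (\<Sum>a\<in>F. (r * c a) * a)" by (simp add: x sum_distrib_left mult.assoc)
  thus ?thesis unfolding ideal_gen_def using x by (intro CollectI exI[of _ F] exI[of _ "\<lambda>a. r * c a"]) auto
qed

lemma ideal_gen_add: "x \<in> ideal_gen A \<Longrightarrow> y \<in> ideal_gen A \<Longrightarrow> x + y \<in> ideal_gen A"
proof -
  assume "x \<in> ideal_gen A" "y \<in> ideal_gen A"
  then obtain F c G d where x: "x = (\<Sum>a\<in>F. c a * a)" "finite F" "F \<subseteq> A"
    and y: "y = (\<Sum>a\<in>G. d a * a)" "finite G" "G \<subseteq> A" unfolding ideal_gen_def by blast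
  define c' where "c' a = (if a \<in> F then c a else 0) + (if a \<in> G then d a else 0)" for a
  have "(\<Sum>a\<in>F \<union> G. c' a * a) = (\<Sum>a\<in>F \<union> G. (if a \<in> F then c a * a else 0)) + (\<Sum>a\<in>F \<union> G. (if a \<in> G then d a * a else 0))"
    unfolding sum.distrib[symmetric] by (intro sum.cong refl) (simp add: c'_def distrib_right)
  also have "\<dots> = x + y"
    using x y by (simp add: sum.If_cases Int_absorb1)
  finally have "x + y = (\<Sum>a\<in>F \<union> G. c' a * a)" ..
  thus ?thesis unfolding ideal_gen_def using x y by (intro CollectI exI[of _ "F \<union> G"] exI[of _ c']) auto
qed

lemma msubst_ideal_gen_zero:
  assumes "\<And>a. a \<in> A \<Longrightarrow> msubst \<theta> a = 0" "x \<in> ideal_gen A"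
  shows "msubst \<theta> x = 0"
proof -
  obtain F c where x: "x = (\<Sum>a\<in>F. c a * a)" "F \<subseteq> A" using assms(2) unfolding ideal_gen_def by blast
  show ?thesis using x assms(1) by (auto simp: msubst_sum msubst_mult intro!: sum.neutral)
qed

definition pr :: "nat \<Rightarrow> nat \<Rightarrow> nat" where "pr N k = (if k = 1 then N else k - 1)"
definition sc :: "nat \<Rightarrow> nat \<Rightarrow> nat" where "sc N k = (if k = N then 1 else k + 1)"
definition tri :: "nat \<Rightarrow> nat \<Rightarrow> nat set" where "tri N k = {pr N k, k, sc N k}"

lemma CN_E_iff: "e \<in> CN_E N \<longleftrightarrow> (\<exists>i. 1 \<le> i \<and> i < N \<and> e = {i, i+1}) \<or> e = {N, 1}"
  by (auto simp: CN_E_def)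

lemma nb_cycle:
  assumes "N \<ge> 4" "{a, i} \<in> CN_E N"
  shows "i \<in> {1..N} \<and> (a = pr N i \<or> a = sc N i)"
  using assms unfolding CN_E_iff pr_def sc_def by (auto simp: doubleton_eq_iff)

lemma prsc_basic:
  assumes "N \<ge> 4" "i \<in> {1..N}"
  shows "pr N i \<noteq> sc N i" "pr N i \<noteq> i" "sc N i \<noteq> i" "pr N i \<in> {1..N}" "sc N i \<in> {1..N}"
    "sc N (pr N i) = i" "pr N (sc N i) = i"
  using assms unfolding pr_def sc_def by auto

lemma edge_pr: "N \<ge> 4 \<Longrightarrow> i \<in> {1..N} \<Longrightarrow> {pr N i, i} \<in> CN_E N"
  unfolding CN_E_iff pr_def by (cases "i = 1") (auto intro: exI[of _ "i - 1"])

lemma edge_sc: "N \<ge> 4 \<Longrightarrow> i \<in> {1..N} \<Longrightarrow> {i, sc N i} \<in> CN_E N"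
  unfolding CN_E_iff sc_def by (cases "i = N") auto

lemma nonadj_cycle:
  assumes "N \<ge> 4" "i \<in> {1..N}"
  shows "{pr N i, sc N i} \<notin> CN_E N"
proof
  assume "{pr N i, sc N i} \<in> CN_E N"
  then have "pr N i = pr N (sc N i) \<or> pr N i = sc N (sc N i)" using nb_cycle[OF assms(1)] by blast
  then show False using assms unfolding pr_def sc_def by (auto split: if_splits)
qed

lemma tri_not_edge:
  assumes "N \<ge> 4" "i \<in> {1..N}"
  shows "tri N i \<notin> CN_E N"
proof
  assume "tri N i \<in> CN_E N"
  then obtain a b where ab: "tri N i = {a, b}" unfolding CN_E_iff by blast
  have "pr N i \<in> {a,b}" "i \<in> {a,b}" "sc N i \<in> {a,b}" using ab unfolding tri_def by auto
  then show False using prsc_basic[OF assms] by auto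
qed

lemma scsc: "N \<ge> 4 \<Longrightarrow> i \<in> {1..N} \<Longrightarrow> sc N (sc N i) \<noteq> i \<and> sc N (sc N i) \<noteq> pr N i \<and> sc N (sc N i) \<noteq> sc N i"
  unfolding pr_def sc_def by auto

lemma prpr: "N \<ge> 4 \<Longrightarrow> i \<in> {1..N} \<Longrightarrow> pr N (pr N i) \<noteq> i \<and> pr N (pr N i) \<noteq> sc N i \<and> pr N (pr N i) \<noteq> pr N i"
  unfolding pr_def sc_def by auto

lemma tri_inj:
  assumes "N \<ge> 4" "i \<in> {1..N}" "j \<in> {1..N}" "tri N i = tri N j"
  shows "i = j"
proof (rule ccontr)
  assume ne: "i \<noteq> j"
  have j: "j \<in> tri N i" and pj: "pr N j \<in> tri N i" and sj: "sc N j \<in> tri N i"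
    using assms(4) unfolding tri_def by auto
  from j ne have "j = pr N i \<or> j = sc N i" unfolding tri_def by auto
  then show False
  proof
    assume "j = pr N i"
    then show False using pj prpr[OF assms(1,2)] unfolding tri_def by auto
  next
    assume "j = sc N i"
    then show False using sj scsc[OF assms(1,2)] unfolding tri_def by auto
  qed
qed

lemma tri_sub: "N \<ge> 4 \<Longrightarrow> i \<in> {1..N} \<Longrightarrow> tri N i \<subseteq> {1..N}"
  using prsc_basic unfolding tri_def by auto

lemma acyclic_irrefl: "acyclic D \<Longrightarrow> (i, i) \<notin> D"
  unfolding acyclic_def by blast

lemma imset_support:
  assumes N4: "N \<ge> 4" and EC: "E \<subseteq> CN_E N" and dag: "is_dag V D" and sk: "skel D = E"
    and col: "colliders D = S"
  shows "{T. T \<subseteq> V \<and> charimset D T} = E \<union> tri N ` S"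
proof -
  have DV: "D \<subseteq> V \<times> V" and ac: "acyclic D" using dag by (auto simp: is_dag_def)
  have irr: "(i, i) \<notin> D" for i using acyclic_irrefl[OF ac] .
  have DE: "(a, b) \<in> D \<Longrightarrow> {a, b} \<in> E" for a b using sk unfolding skel_def by blast
  have nb: "(j, i) \<in> D \<Longrightarrow> i \<in> {1..N} \<and> (j = pr N i \<or> j = sc N i)" for i j
    using DE[of j i] EC nb_cycle[OF N4] by blast
  have two: "{a, b} = {pr N i, sc N i}" if "(a, i) \<in> D" "(b, i) \<in> D" "a \<noteq> b" for a b i
    using nb[OF that(1)] nb[OF that(2)] that(3) by auto
  have vs: "vstruct D a i b" if "(a, i) \<in> D" "(b, i) \<in> D" "a \<noteq> b" for a b i
  proof -
    have i: "i \<in> {1..N}" using nb[OF that(1)] by blast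
    have "{a, b} \<notin> E" using two[OF that] nonadj_cycle[OF N4 i] EC by auto
    then have "(a, b) \<notin> D" "(b, a) \<notin> D" using DE[of a b] DE[of b a] by (auto simp: insert_commute)
    then show ?thesis using that by (simp add: vstruct_def)
  qed
  show ?thesis
  proof (intro equalityI subsetI)
    fix T assume "T \<in> {T. T \<subseteq> V \<and> charimset D T}"
    then have TV: "T \<subseteq> V" and c2: "2 \<le> card T" and ex: "\<exists>i\<in>T. T - {i} \<subseteq> pa D i"
      unfolding charimset_def mem_Collect_eq by blast+
    obtain i where iT: "i \<in> T" and pa: "T - {i} \<subseteq> pa D i" using ex by blast
    have "\<exists>j\<in>T. j \<noteq> i"
    proof (rule ccontr)
      assume "\<not> ?thesis"
      then have "T \<subseteq> {i}" by blast
      then have "card T \<le> 1" using card_mono[of "{i}" T] by simp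
      then show False using c2 by linarith
    qed
    then obtain j where jT: "j \<in> T" and ji: "j \<noteq> i" by blast
    have jD: "(j, i) \<in> D" using pa jT ji by (auto simp: pa_def)
    show "T \<in> E \<union> tri N ` S"
    proof (cases "\<exists>k\<in>T. k \<noteq> i \<and> k \<noteq> j")
      case True
      then obtain k where kT: "k \<in> T" "k \<noteq> i" "k \<noteq> j" by blast
      have kD: "(k, i) \<in> D" using pa kT by (auto simp: pa_def)
      have jk: "{j, k} = {pr N i, sc N i}" using two[OF jD kD] kT(3) by auto
      have "vstruct D j i k" using vs[OF jD kD] kT(3) by auto
      then have iS: "i \<in> S" using col unfolding colliders_def by blast
      have "T \<subseteq> tri N i"
      proof
        fix x assume xT: "x \<in> T"
        show "x \<in> tri N i"
        proof (cases "x = i")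
          case True then show ?thesis by (simp add: tri_def)
        next
          case False
          then have "(x, i) \<in> D" using pa xT by (auto simp: pa_def)
          then show ?thesis using nb by (auto simp: tri_def)
        qed
      qed
      moreover have "tri N i \<subseteq> T" using jk iT jT kT unfolding tri_def by (auto simp: doubleton_eq_iff)
      ultimately have "T = tri N i" by blast
      then show ?thesis using iS by blast
    next
      case False
      then have "T = {j, i}" using iT jT by auto
      then show ?thesis using DE[OF jD] by simp
    qed
  next
    fix T assume "T \<in> E \<union> tri N ` S"
    then show "T \<in> {T. T \<subseteq> V \<and> charimset D T}"
    proof
      assume "T \<in> E"
      then obtain x y where xy: "T = {x, y}" "(x, y) \<in> D" using sk unfolding skel_def by blast
      have "x \<noteq> y" using irr xy(2) by blast
      then have "card T = 2" using xy(1) by simp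
      moreover have "T - {y} \<subseteq> pa D y" using xy by (auto simp: pa_def)
      moreover have "T \<subseteq> V" using xy DV by auto
      ultimately show ?thesis unfolding charimset_def using xy(1) by auto
    next
      assume "T \<in> tri N ` S"
      then obtain k where kS: "k \<in> S" and T: "T = tri N k" by blast
      then obtain a b where v: "vstruct D a k b" using col unfolding colliders_def by blast
      then have aD: "(a, k) \<in> D" and bD: "(b, k) \<in> D" and ab: "a \<noteq> b" by (auto simp: vstruct_def)
      have ak: "a \<noteq> k" "b \<noteq> k" using irr aD bD by auto
      have Teq: "T = {a, k, b}" using two[OF aD bD ab] T unfolding tri_def by (auto simp: doubleton_eq_iff)
      have "card T = 3" using Teq ak ab by auto
      moreover have "T - {k} \<subseteq> pa D k" using Teq aD bD by (auto simp: pa_def)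
      moreover have "T \<subseteq> V" using Teq aD bD DV by auto
      ultimately show ?thesis unfolding charimset_def using Teq by auto
    qed
  qed
qed

definition odag :: "nat \<Rightarrow> nat set set \<Rightarrow> nat set \<Rightarrow> (nat \<times> nat) set" where
  "odag N E S = {(i, sc N i) | i. i \<in> {1..N} \<and> {i, sc N i} \<in> E \<and> sc N i \<in> S}
              \<union> {(sc N i, i) | i. i \<in> {1..N} \<and> {i, sc N i} \<in> E \<and> sc N i \<notin> S}"

definition posg :: "nat \<Rightarrow> nat \<Rightarrow> nat \<Rightarrow> nat" where
  "posg N g k = (if g \<le> k then k - g else k + N - g)"

lemma posg_sc:
  assumes "N \<ge> 4" "i \<in> {1..N}" "g \<in> {1..N}" "sc N i \<noteq> g"
  shows "posg N g (sc N i) = posg N g i + 1"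
  using assms unfolding posg_def sc_def by auto

lemma edges_sc:
  assumes "N \<ge> 4" "e \<in> CN_E N"
  shows "\<exists>i\<in>{1..N}. e = {i, sc N i}"
  using assms unfolding CN_E_iff sc_def
  by (auto intro: bexI[of _ N] simp: insert_commute)

lemma odag_props:
  assumes N4: "N \<ge> 4" and EC: "E \<subseteq> CN_E N" and EV: "\<forall>e\<in>E. e \<subseteq> V" and SN: "S \<subseteq> {1..N}"
    and nc: "\<forall>i\<in>{1..N}. i \<in> S \<longrightarrow> sc N i \<notin> S"
    and g: "g \<in> {1..N}"
    and gap: "\<forall>i\<in>{1..N}. {i, sc N i} \<in> E \<and> sc N i \<notin> S \<longrightarrow> sc N i \<noteq> g"
    and full: "\<forall>k\<in>S. {pr N k, k} \<in> E \<and> {k, sc N k} \<in> E"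
  shows "is_dag V (odag N E S) \<and> skel (odag N E S) = E \<and> colliders (odag N E S) = S"
proof -
  let ?D = "odag N E S"
  have DE: "{a, b} \<in> E" if "(a, b) \<in> ?D" for a b
    using that unfolding odag_def by (auto simp: insert_commute)
  have DV: "?D \<subseteq> V \<times> V"
  proof
    fix x assume "x \<in> ?D"
    then obtain a b where "x = (a, b)" "(a, b) \<in> ?D" by (cases x) auto
    then show "x \<in> V \<times> V" using DE[of a b] EV by auto
  qed
  define r where "r k = (if k \<in> S then 0 else posg N g k + 1)" for k
  have dec: "r b < r a" if "(a, b) \<in> ?D" for a b
  proof -
    from that consider (t1) i where "i \<in> {1..N}" "{i, sc N i} \<in> E" "sc N i \<in> S" "a = i" "b = sc N i"
      | (t2) i where "i \<in> {1..N}" "{i, sc N i} \<in> E" "sc N i \<notin> S" "a = sc N i" "b = i"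
      unfolding odag_def by blast
    then show ?thesis
    proof cases
      case t1
      then have "i \<notin> S" using nc by blast
      then show ?thesis using t1 by (simp add: r_def)
    next
      case t2
      then have "posg N g (sc N i) = posg N g i + 1" using posg_sc[OF N4 _ g] gap by blast
      then show ?thesis using t2 by (simp add: r_def)
    qed
  qed
  have "?D\<inverse> \<subseteq> measure r" using dec by auto
  then have "acyclic (?D\<inverse>)" by (meson wf_acyclic wf_measure wf_subset)
  then have ac: "acyclic ?D" by (simp add: acyclic_converse)
  have dag: "is_dag V ?D" using DV ac by (simp add: is_dag_def)
  have sk: "skel ?D = E"
  proof (intro equalityI subsetI)
    fix e assume "e \<in> skel ?D"
    then show "e \<in> E" using DE unfolding skel_def by blast
  next
    fix e assume eE: "e \<in> E"
    then obtain i where i: "i \<in> {1..N}" "e = {i, sc N i}" using edges_sc[OF N4] EC by blast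
    show "e \<in> skel ?D"
    proof (cases "sc N i \<in> S")
      case True
      then have "(i, sc N i) \<in> ?D" using i eE unfolding odag_def by blast
      then show ?thesis using i unfolding skel_def by blast
    next
      case False
      then have "(sc N i, i) \<in> ?D" using i eE unfolding odag_def by blast
      then show ?thesis using i unfolding skel_def by (auto simp: insert_commute)
    qed
  qed
  have col: "colliders ?D = S"
  proof (intro equalityI subsetI)
    fix k assume "k \<in> colliders ?D"
    then obtain a b where v: "vstruct ?D a k b" unfolding colliders_def by blast
    then have aD: "(a, k) \<in> ?D" and bD: "(b, k) \<in> ?D" and ab: "a \<noteq> b" by (auto simp: vstruct_def)
    have in2: "k \<in> S \<or> x = sc N k" if "(x, k) \<in> ?D" for x
      using that unfolding odag_def by auto
    show "k \<in> S" using in2[OF aD] in2[OF bD] ab by auto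
  next
    fix k assume kS: "k \<in> S"
    have k: "k \<in> {1..N}" using kS SN by auto
    have p: "pr N k \<in> {1..N}" "sc N (pr N k) = k" "pr N k \<noteq> sc N k" using prsc_basic[OF N4 k] by auto
    have "{pr N k, sc N (pr N k)} \<in> E" using full kS p(2) by auto
    then have aD: "(pr N k, k) \<in> ?D" using p kS unfolding odag_def by force
    have "sc N k \<notin> S" using nc kS k by blast
    then have bD: "(sc N k, k) \<in> ?D" using full kS k unfolding odag_def by blast
    have "{pr N k, sc N k} \<notin> E" using nonadj_cycle[OF N4 k] EC by blast
    moreover have "{sc N k, pr N k} = {pr N k, sc N k}" by blast
    ultimately have "(pr N k, sc N k) \<notin> ?D" "(sc N k, pr N k) \<notin> ?D" using DE[of "pr N k" "sc N k"] DE[of "sc N k" "pr N k"] by auto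
    then have "vstruct ?D (pr N k) k (sc N k)" using aD bD p(3) by (simp add: vstruct_def)
    then show "k \<in> colliders ?D" unfolding colliders_def by blast
  qed
  show ?thesis using dag sk col by blast
qed

lemma imset_mono_eq:
  assumes N4: "N \<ge> 4" and EC: "E \<subseteq> CN_E N" and ex: "\<exists>D. is_dag V D \<and> skel D = E \<and> colliders D = S"
  shows "imset_mono V E S = gmono (E \<union> tri N ` S)"
proof -
  let ?D = "class_dag V E S"
  have "is_dag V ?D \<and> skel ?D = E \<and> colliders ?D = S"
    unfolding class_dag_def using someI_ex[OF ex] .
  then have "{T. T \<subseteq> V \<and> charimset ?D T} = E \<union> tri N ` S"
    using imset_support[OF N4 EC] by blast
  then show ?thesis unfolding imset_mono_def gmono_def by simp
qed

lemma PnE_sub: "n \<le> N \<Longrightarrow> Pn_E n \<subseteq> CN_E N"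
  unfolding Pn_E_def CN_E_def by auto

lemma PpE_sub: "4 \<le> n \<Longrightarrow> n \<le> N \<Longrightarrow> Pp_E n N \<subseteq> CN_E N"
  unfolding Pp_E_def CN_E_def by force

lemma psiC:
  assumes N4: "N \<ge> 4" and S: "S \<in> CN_C N"
  shows "imset_mono (CN_V N) (CN_E N) S = gmono (CN_E N \<union> tri N ` S)"
proof (rule imset_mono_eq[OF N4 order.refl])
  obtain g where g: "g \<in> S" using S by (auto simp: CN_C_def)
  have SN: "S \<subseteq> {1..N}" and cn: "cyc_noncons N S" using S by (auto simp: CN_C_def)
  show "\<exists>D. is_dag (CN_V N) D \<and> skel D = CN_E N \<and> colliders D = S"
  proof -
    have h1: "\<forall>e\<in>CN_E N. e \<subseteq> CN_V N" unfolding CN_E_def CN_V_def using N4 by auto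
    have h2: "\<forall>i\<in>{1..N}. i \<in> S \<longrightarrow> sc N i \<notin> S"
      using cn unfolding cyc_noncons_def sc_def by auto
    have h3: "g \<in> {1..N}" using g SN by auto
    have h4: "\<forall>i\<in>{1..N}. {i, sc N i} \<in> CN_E N \<and> sc N i \<notin> S \<longrightarrow> sc N i \<noteq> g" using g by auto
    have h5: "\<forall>k\<in>S. {pr N k, k} \<in> CN_E N \<and> {k, sc N k} \<in> CN_E N"
      using SN edge_pr[OF N4] edge_sc[OF N4] by auto
    show ?thesis using odag_props[OF N4 order.refl h1 SN h2 h3 h4 h5] by blast
  qed
qed

lemma psiP:
  assumes n4: "n \<ge> 4" and nN: "n \<le> N" and S: "S \<in> Pn_C n"
  shows "imset_mono (Pn_V n) (Pn_E n) S = gmono (Pn_E n \<union> tri N ` S)"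
proof -
  have N4: "N \<ge> 4" using n4 nN by simp
  have SB: "S \<subseteq> {2..n-1}" and cn: "\<forall>i. \<not> (i \<in> S \<and> i + 1 \<in> S)" using S by (auto simp: Pn_C_def)
  have SN: "S \<subseteq> {1..N}" using SB nN by (auto dest!: subsetD)
  show ?thesis
  proof (rule imset_mono_eq[OF N4 PnE_sub[OF nN]])
    show "\<exists>D. is_dag (Pn_V n) D \<and> skel D = Pn_E n \<and> colliders D = S"
    proof -
      have h1: "\<forall>e\<in>Pn_E n. e \<subseteq> Pn_V n" unfolding Pn_E_def Pn_V_def by auto
      have h2: "\<forall>i\<in>{1..N}. i \<in> S \<longrightarrow> sc N i \<notin> S"
      proof (intro ballI impI)
        fix i assume i: "i \<in> {1..N}" "i \<in> S"
        have "i \<le> n - 1" using SB i(2) by (auto simp: subset_iff)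
        then have "i \<noteq> N" using nN n4 by linarith
        then show "sc N i \<notin> S" using cn i by (simp add: sc_def)
      qed
      have h3: "(1::nat) \<in> {1..N}" using N4 by auto
      have h4: "\<forall>i\<in>{1..N}. {i, sc N i} \<in> Pn_E n \<and> sc N i \<notin> S \<longrightarrow> sc N i \<noteq> 1"
      proof (intro ballI impI)
        fix i assume i: "i \<in> {1..N}" "{i, sc N i} \<in> Pn_E n \<and> sc N i \<notin> S"
        show "sc N i \<noteq> 1"
        proof
          assume "sc N i = 1"
          then have "i = N" using i(1) unfolding sc_def by (cases "i = N") auto
          then have "{N, 1} \<in> Pn_E n" using i \<open>sc N i = 1\<close> by simp
          then obtain j where j: "{N, 1} = {j, j + 1}" "1 \<le> j" unfolding Pn_E_def by blast
          then have "(N = j \<and> 1 = j + 1) \<or> (N = j + 1 \<and> 1 = j)" by (simp add: doubleton_eq_iff)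
          then show False using N4 j(2) by linarith
        qed
      qed
      have h5: "\<forall>k\<in>S. {pr N k, k} \<in> Pn_E n \<and> {k, sc N k} \<in> Pn_E n"
      proof
        fix k assume k: "k \<in> S"
        then have k2: "2 \<le> k" "k \<le> n - 1" using SB by (auto simp: subset_iff)
        have "pr N k = k - 1" "sc N k = k + 1" using k2 nN by (auto simp: pr_def sc_def)
        moreover have "{k - 1, k} \<in> Pn_E n" unfolding Pn_E_def using k2
          by (intro CollectI exI[of _ "k - 1"]) auto
        moreover have "{k, k + 1} \<in> Pn_E n" unfolding Pn_E_def using k2 by auto
        ultimately show "{pr N k, k} \<in> Pn_E n \<and> {k, sc N k} \<in> Pn_E n" by simp
      qed
      show ?thesis using odag_props[OF N4 PnE_sub[OF nN] h1 SN h2 h3 h4 h5] by blast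
    qed
  qed
qed

lemma psiPp:
  assumes n4: "n \<ge> 4" and nN: "n \<le> N" and S: "S \<in> Pp_C n N"
  shows "imset_mono (Pp_V n N) (Pp_E n N) S = gmono (Pp_E n N \<union> tri N ` S)"
proof -
  have N4: "N \<ge> 4" using n4 nN by simp
  have SA: "S \<subseteq> {n..N} \<union> {1}" and cn1: "\<forall>k. n-1 \<le> k \<and> k < N \<longrightarrow> \<not> (k \<in> S \<and> k+1 \<in> S)"
    and cn2: "\<not> (N \<in> S \<and> 1 \<in> S)" using S by (auto simp: Pp_C_def)
  have SN: "S \<subseteq> {1..N}" using SA nN N4 n4 by (auto simp: subset_iff)
  show ?thesis
  proof (rule imset_mono_eq[OF N4 PpE_sub[OF n4 nN]])
    show "\<exists>D. is_dag (Pp_V n N) D \<and> skel D = Pp_E n N \<and> colliders D = S"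
    proof -
      have h1: "\<forall>e\<in>Pp_E n N. e \<subseteq> Pp_V n N" unfolding Pp_E_def Pp_V_def using n4 nN by auto
      have h2: "\<forall>i\<in>{1..N}. i \<in> S \<longrightarrow> sc N i \<notin> S"
      proof (intro ballI impI)
        fix i assume i: "i \<in> {1..N}" "i \<in> S"
        show "sc N i \<notin> S"
        proof (cases "i = N")
          case True then show ?thesis using cn2 i by (simp add: sc_def)
        next
          case False
          then have "sc N i = i + 1" by (simp add: sc_def)
          moreover have "i = 1 \<or> (n - 1 \<le> i \<and> i < N)" using i SA False by (auto simp: subset_iff)
          ultimately show ?thesis using cn1 i SA n4 by auto
        qed
      qed
      have h3: "(3::nat) \<in> {1..N}" using N4 by auto
      have h4: "\<forall>i\<in>{1..N}. {i, sc N i} \<in> Pp_E n N \<and> sc N i \<notin> S \<longrightarrow> sc N i \<noteq> 3"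
      proof (intro ballI impI)
        fix i assume i: "i \<in> {1..N}" "{i, sc N i} \<in> Pp_E n N \<and> sc N i \<notin> S"
        show "sc N i \<noteq> 3"
        proof
          assume "sc N i = 3"
          then have "i = 2" using i(1) unfolding sc_def by (cases "i = N") auto
          then have "{2, 3} \<in> Pp_E n N" using i \<open>sc N i = 3\<close> by simp
          then have "(\<exists>k. n - 1 \<le> k \<and> {2,3} = {k, k + 1}) \<or> {2,3} = {N, 1::nat} \<or> {2,3} = {1, 2::nat}"
            unfolding Pp_E_def by blast
          then show False using n4 by (auto simp: doubleton_eq_iff)
        qed
      qed
      have h5: "\<forall>k\<in>S. {pr N k, k} \<in> Pp_E n N \<and> {k, sc N k} \<in> Pp_E n N"
      proof
        fix k assume k: "k \<in> S"
        show "{pr N k, k} \<in> Pp_E n N \<and> {k, sc N k} \<in> Pp_E n N"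
        proof (cases "k = 1")
          case True
          then show ?thesis using N4 by (auto simp: pr_def sc_def Pp_E_def insert_commute)
        next
          case False
          then have kk: "n \<le> k" "k \<le> N" using k SA by (auto simp: subset_iff)
          have "pr N k = k - 1" using kk n4 by (auto simp: pr_def)
          moreover have "{k - 1, k} \<in> Pp_E n N" unfolding Pp_E_def using kk n4
            by (intro UnI1 CollectI exI[of _ "k - 1"]) auto
          moreover have "{k, sc N k} \<in> Pp_E n N"
          proof (cases "k = N")
            case True then show ?thesis by (simp add: sc_def Pp_E_def)
          next
            case False then show ?thesis using kk unfolding sc_def Pp_E_def by auto
          qed
          ultimately show ?thesis by simp
        qed
      qed
      show ?thesis using odag_props[OF N4 PpE_sub[OF n4 nN] h1 SN h2 h3 h4 h5] by blast
    qed
  qed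
qed

lemma msubst_mvar_id: "msubst mvar p = (p :: ('v, 'k::comm_semiring_1) mpoly)"
proof -
  have mmono: "mmono mvar m = Poly_Mapping.single m (1::'k)" for m :: "'v \<Rightarrow>\<^sub>0 nat"
  proof -
    have "mmono mvar m = Poly_Mapping.single (\<Sum>v\<in>Poly_Mapping.keys m. \<Sum>i<Poly_Mapping.lookup m v. Poly_Mapping.single v (1::nat)) (1::'k)"
      by (rule mono_monomial) (simp add: mvar_def)
    moreover have "(\<Sum>v\<in>Poly_Mapping.keys m. \<Sum>i<Poly_Mapping.lookup m v. Poly_Mapping.single v (1::nat)) = m"
    proof (rule poly_mapping_eqI)
      fix T
      have "(\<Sum>v\<in>Poly_Mapping.keys m. Poly_Mapping.lookup m v * Poly_Mapping.lookup (Poly_Mapping.single v (1::nat)) T)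
          = (\<Sum>v\<in>Poly_Mapping.keys m. if v = T then Poly_Mapping.lookup m v else 0)"
        by (intro sum.cong refl) (simp add: lookup_single when_def)
      also have "\<dots> = Poly_Mapping.lookup m T" by (simp add: sum.delta in_keys_iff)
      finally show "Poly_Mapping.lookup (\<Sum>v\<in>Poly_Mapping.keys m. \<Sum>i<Poly_Mapping.lookup m v. Poly_Mapping.single v (1::nat)) T = Poly_Mapping.lookup m T"
        by (simp only: lookup_sum_rep)
    qed
    ultimately show ?thesis by simp
  qed
  have "msubst mvar p = (\<Sum>m\<in>Poly_Mapping.keys p. Poly_Mapping.single m (Poly_Mapping.lookup p m))"
    unfolding msubst_alt by (intro sum.cong refl) (simp add: mmono mult_single)
  also have "\<dots> = p" by (rule poly_expand[symmetric])
  finally show ?thesis .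
qed

lemma finite_CN_E: "finite (CN_E N)"
proof (rule finite_subset[of _ "Pow {0..N+1}"])
  show "CN_E N \<subseteq> Pow {0..N+1}" unfolding CN_E_def by auto
qed simp

lemma cond_restrict:
  assumes N4: "N \<ge> 4" and E': "E' \<subseteq> CN_E N" and Y: "Y \<subseteq> {1..N}"
  shows "(\<forall>S\<in>CN_C N. T \<notin> E' \<union> tri N ` (S \<inter> Y)) \<or>
         (\<exists>T2. \<forall>S\<in>CN_C N. (T \<in> E' \<union> tri N ` (S \<inter> Y)) = (T2 \<in> CN_E N \<union> tri N ` S))"
proof (cases "T \<in> E' \<union> tri N ` Y")
  case False
  then show ?thesis by blast
next
  case True
  show ?thesis
  proof (rule disjI2, rule exI[of _ T], intro ballI)
    fix S assume S: "S \<in> CN_C N"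
    have SN: "S \<subseteq> {1..N}" using S by (auto simp: CN_C_def)
    show "(T \<in> E' \<union> tri N ` (S \<inter> Y)) = (T \<in> CN_E N \<union> tri N ` S)"
    proof (cases "T \<in> E'")
      case True then show ?thesis using E' by auto
    next
      case False
      then obtain k where k: "k \<in> Y" "T = tri N k" using True by blast
      have kN: "k \<in> {1..N}" using k Y by auto
      have nE: "T \<notin> CN_E N" using tri_not_edge[OF N4 kN] k by simp
      have "(T \<in> tri N ` S) = (k \<in> S)"
      proof
        assume "T \<in> tri N ` S"
        then obtain j where "j \<in> S" "tri N k = tri N j" using k by auto
        then show "k \<in> S" using tri_inj[OF N4 kN, of j] SN by auto
      qed (use k in auto)
      moreover have "(T \<in> tri N ` (S \<inter> Y)) = (k \<in> S)"
      proof
        assume "T \<in> tri N ` (S \<inter> Y)"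
        then obtain j where "j \<in> S \<inter> Y" "tri N k = tri N j" using k by auto
        then show "k \<in> S" using tri_inj[OF N4 kN, of j] SN by auto
      qed (use k in auto)
      ultimately show ?thesis using False nE by auto
    qed
  qed
qed

lemma cond_extend:
  assumes E': "E' \<subseteq> CN_E N" and e0: "e0 \<in> E'"
  shows "(\<forall>a\<in>X. T \<notin> CN_E N \<union> tri N ` a) \<or>
         (\<exists>T2. \<forall>a\<in>X. (T \<in> CN_E N \<union> tri N ` a) = (T2 \<in> E' \<union> tri N ` a))"
proof (cases "T \<in> CN_E N")
  case True
  then show ?thesis using e0 by blast
next
  case False
  then have "\<forall>a\<in>X. (T \<in> CN_E N \<union> tri N ` a) = (T \<in> E' \<union> tri N ` a)" using E' by auto
  then show ?thesis by blast
qed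

lemma cond_drop:
  assumes N4: "N \<ge> 4" and E': "E' \<subseteq> CN_E N" and X: "\<forall>b\<in>X. b \<subseteq> {1..N}"
  shows "(\<forall>b\<in>X. T \<notin> tri N ` b) \<or> (\<exists>T2. \<forall>b\<in>X. (T \<in> tri N ` b) = (T2 \<in> E' \<union> tri N ` b))"
proof (cases "T \<in> E'")
  case True
  have "\<forall>b\<in>X. T \<notin> tri N ` b"
  proof (intro ballI notI)
    fix b assume b: "b \<in> X" "T \<in> tri N ` b"
    then obtain k where k: "k \<in> b" "T = tri N k" by blast
    then have "k \<in> {1..N}" using X b by blast
    then show False using tri_not_edge[OF N4, of k] k True E' by auto
  qed
  then show ?thesis by blast
next
  case False
  then show ?thesis by blast
qed

lemma setS:
  assumes n4: "n \<ge> 4" and nN: "n \<le> N" and S: "S \<in> CN_C N"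
  shows "S \<inter> ({n..N} \<union> {1}) \<in> Pp_C n N" "S \<inter> {2..n-1} \<in> Pn_C n"
    "(S \<inter> ({n..N} \<union> {1}), S \<inter> {2..n-1}) \<in> Qmn n N"
    "S \<inter> ({n..N} \<union> {1}) \<union> S \<inter> {2..n-1} = S"
proof -
  have SN: "S \<subseteq> {1..N}" and ne: "S \<noteq> {}" and cn: "cyc_noncons N S" using S by (auto simp: CN_C_def)
  have SN': "1 \<le> x \<and> x \<le> N" if "x \<in> S" for x using SN that by auto
  have cn1: "\<not> (i \<in> S \<and> i + 1 \<in> S)" if "1 \<le> i" "i < N" for i using cn that by (auto simp: cyc_noncons_def)
  have cn2: "\<not> (N \<in> S \<and> 1 \<in> S)" using cn by (auto simp: cyc_noncons_def)
  show eq: "S \<inter> ({n..N} \<union> {1}) \<union> S \<inter> {2..n-1} = S"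
  proof (intro equalityI subsetI)
    fix x assume x: "x \<in> S"
    then have "1 \<le> x \<and> x \<le> N" by (rule SN')
    then show "x \<in> S \<inter> ({n..N} \<union> {1}) \<union> S \<inter> {2..n-1}" using x n4 by auto
  qed auto
  show p1: "S \<inter> ({n..N} \<union> {1}) \<in> Pp_C n N"
    unfolding Pp_C_def using cn1 cn2 n4 by auto
  have ncB: "\<not> (i \<in> S \<inter> {2..n-1} \<and> i + 1 \<in> S \<inter> {2..n-1})" for i
  proof
    assume h: "i \<in> S \<inter> {2..n-1} \<and> i + 1 \<in> S \<inter> {2..n-1}"
    then have "1 \<le> i" "i < N" using nN by auto
    then show False using cn1 h by blast
  qed
  show p2: "S \<inter> {2..n-1} \<in> Pn_C n"
    unfolding Pn_C_def mem_Collect_eq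
  proof (intro conjI allI)
    show "S \<inter> {2..n-1} \<subseteq> {2..n-1}" by (rule Int_lower2)
  qed (rule ncB)
  show "(S \<inter> ({n..N} \<union> {1}), S \<inter> {2..n-1}) \<in> Qmn n N"
    unfolding Qmn_def mem_Collect_eq case_prod_conv eq using p1 p2 cn ne by blast
qed

lemma setQ:
  assumes n4: "n \<ge> 4" and nN: "n \<le> N" and Q: "(a, b) \<in> Qmn n N"
  shows "a \<union> b \<in> CN_C N" "(a \<union> b) \<inter> ({n..N} \<union> {1}) = a" "(a \<union> b) \<inter> {2..n-1} = b"
    "a \<inter> b = {}" "a \<in> Pp_C n N" "b \<in> Pn_C n"
proof -
  have a: "a \<in> Pp_C n N" and b: "b \<in> Pn_C n" and cn: "cyc_noncons N (a \<union> b)" and ne: "a \<union> b \<noteq> {}"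
    using Q by (auto simp: Qmn_def)
  have aA: "a \<subseteq> {n..N} \<union> {1}" using a by (auto simp: Pp_C_def)
  have bB: "b \<subseteq> {2..n-1}" using b by (auto simp: Pn_C_def)
  have aA': "n \<le> x \<and> x \<le> N \<or> x = 1" if "x \<in> a" for x using aA that by auto
  have bB': "2 \<le> x \<and> x \<le> n - 1" if "x \<in> b" for x using bB that by auto
  show "a \<in> Pp_C n N" "b \<in> Pn_C n" using a b by auto
  have dA: "b \<inter> ({n..N} \<union> {1}) = {}"
  proof (intro equalityI subsetI)
    fix x assume x: "x \<in> b \<inter> ({n..N} \<union> {1})"
    then have "2 \<le> x \<and> x \<le> n - 1" using bB' by blast
    then show "x \<in> {}" using x n4 by auto
  qed auto
  have dB: "a \<inter> {2..n-1} = {}"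
  proof (intro equalityI subsetI)
    fix x assume x: "x \<in> a \<inter> {2..n-1}"
    then have "n \<le> x \<and> x \<le> N \<or> x = 1" using aA' by blast
    then show "x \<in> {}" using x n4 by auto
  qed auto
  have A1: "{n..N} \<union> {1} \<subseteq> {1..N}" using n4 nN by auto
  have B1: "{2..n-1} \<subseteq> {1..N}" using n4 nN by auto
  have "a \<union> b \<subseteq> {1..N}" using aA bB A1 B1 by blast
  then show "a \<union> b \<in> CN_C N" unfolding CN_C_def using cn ne by blast
  show "(a \<union> b) \<inter> ({n..N} \<union> {1}) = a" unfolding Int_Un_distrib2 Int_absorb2[OF aA] dA by simp
  show "(a \<union> b) \<inter> {2..n-1} = b" unfolding Int_Un_distrib2 Int_absorb2[OF bB] dB by simp
  show "a \<inter> b = {}" using aA dA by blast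
qed

lemma gmono_union:
  "finite G \<Longrightarrow> finite H \<Longrightarrow> G \<inter> H = {} \<Longrightarrow> gmono (G \<union> H) = gmono G * gmono H"
  unfolding gmono_def by (rule prod.union_disjoint)

lemma gmono_is_single: "\<exists>e. gmono G = Poly_Mapping.single e (1::'k::comm_semiring_1)"
  using gmono_single by blast

lemma fin_tri: "finite S \<Longrightarrow> finite (tri N ` S)" by simp

lemma finite_sub_N: "S \<subseteq> {1..N::nat} \<Longrightarrow> finite S" by (erule finite_subset) simp

lemma CN_C_sub: "S \<in> CN_C N \<Longrightarrow> S \<subseteq> {1..N}" by (simp add: CN_C_def)

lemma Pp_C_sub: "n \<ge> 4 \<Longrightarrow> n \<le> N \<Longrightarrow> S \<in> Pp_C n N \<Longrightarrow> S \<subseteq> {1..N}"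
  unfolding Pp_C_def by (auto simp: subset_iff)

lemma Pn_C_sub: "n \<ge> 4 \<Longrightarrow> n \<le> N \<Longrightarrow> S \<in> Pn_C n \<Longrightarrow> S \<subseteq> {1..N}"
  unfolding Pn_C_def by (auto simp: subset_iff)

lemma dir1:
  assumes n4: "n \<ge> 4" and nN: "n \<le> N"
  shows "msubst (\<lambda>S. mvar (S \<inter> ({n..N} \<union> {1}), S \<inter> {2..n-1}))
            ` (IG (CN_V N) (CN_E N) (CN_C N) :: (nat set, 'k::field) mpoly set)
         \<subseteq> fiber_prod (Qmn n N) (IG (Pp_V n N) (Pp_E n N) (Pp_C n N)) (IG (Pn_V n) (Pn_E n) (Pn_C n))"
proof
  have N4: "N \<ge> 4" using n4 nN by simp
  let ?A = "{n..N} \<union> {1::nat}"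
  let ?B = "{2..n-1::nat}"
  let ?\<psi>C = "imset_mono (CN_V N) (CN_E N) :: nat set \<Rightarrow> (nat set, 'k) mpoly"
  let ?\<psi>P' = "imset_mono (Pp_V n N) (Pp_E n N) :: nat set \<Rightarrow> (nat set, 'k) mpoly"
  let ?\<psi>P = "imset_mono (Pn_V n) (Pn_E n) :: nat set \<Rightarrow> (nat set, 'k) mpoly"
  let ?I = "IG (Pp_V n N) (Pp_E n N) (Pp_C n N) :: (nat set, 'k) mpoly set"
  let ?J = "IG (Pn_V n) (Pn_E n) (Pn_C n) :: (nat set, 'k) mpoly set"
  let ?\<iota>1 = "\<lambda>a. mvar (Inl a) :: (nat set + nat set, 'k) mpoly"
  let ?\<iota>2 = "\<lambda>b. mvar (Inr b) :: (nat set + nat set, 'k) mpoly"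
  let ?Id = "ideal_gen (msubst ?\<iota>1 ` ?I \<union> msubst ?\<iota>2 ` ?J)"
  let ?\<chi> = "\<lambda>S. ?\<iota>1 (S \<inter> ?A) * ?\<iota>2 (S \<inter> ?B)"
  fix x assume "x \<in> msubst (\<lambda>S. mvar (S \<inter> ?A, S \<inter> ?B)) ` (IG (CN_V N) (CN_E N) (CN_C N) :: (nat set, 'k) mpoly set)"
  then obtain p where p: "p \<in> polys_in (CN_C N)" "msubst ?\<psi>C p = 0"
    and x: "x = msubst (\<lambda>S. mvar (S \<inter> ?A, S \<inter> ?B)) p" unfolding IG_def by blast
  have x_in: "x \<in> polys_in (Qmn n N)"
    unfolding x by (rule msubst_polys_in[OF p(1)]) (intro polys_in_mvar setS[OF n4 nN])
  have phix: "msubst (\<lambda>(a, b). mvar (Inl a) * mvar (Inr b)) x = msubst ?\<chi> p"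
    unfolding x msubst_msubst by simp
  have Pp_fin: "finite (Pp_E n N \<union> tri N ` S)" if "S \<subseteq> {1..N}" for S
    using finite_subset[OF PpE_sub[OF n4 nN] finite_CN_E] finite_sub_N[OF that] by simp
  have Pn_fin: "finite (Pn_E n \<union> tri N ` S)" if "S \<subseteq> {1..N}" for S
    using finite_subset[OF PnE_sub[OF nN] finite_CN_E] finite_sub_N[OF that] by simp
  have C_fin: "finite (CN_E N \<union> tri N ` S)" if "S \<subseteq> {1..N}" for S
    using finite_CN_E finite_sub_N[OF that] by simp
  have mon: "\<exists>e. ?\<psi>C v = Poly_Mapping.single e 1" if "v \<in> CN_C N" for v
    using psiC[OF N4 that] gmono_is_single by metis
  have "msubst ?\<chi> p \<in> ?Id"
  proof (rule kernel_induct[OF mon _ _ _ p(1) p(2), where P = "\<lambda>q. msubst ?\<chi> q \<in> ?Id"])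
    show "msubst ?\<chi> 0 \<in> ?Id" by (simp add: ideal_gen_zero)
  next
    fix a b assume "msubst ?\<chi> a \<in> ?Id" "msubst ?\<chi> b \<in> ?Id"
    then show "msubst ?\<chi> (a + b) \<in> ?Id" by (simp add: msubst_add ideal_gen_add)
  next
    fix c m m' assume km: "Poly_Mapping.keys m \<subseteq> CN_C N" and km': "Poly_Mapping.keys m' \<subseteq> CN_C N"
      and eqm: "mmono ?\<psi>C m = mmono ?\<psi>C m'"
    let ?\<alpha> = "\<lambda>S. mvar (S \<inter> ?A) :: (nat set, 'k) mpoly"
    let ?\<beta> = "\<lambda>S. mvar (S \<inter> ?B) :: (nat set, 'k) mpoly"
    have G2: "?\<psi>C v = gmono (CN_E N \<union> tri N ` v) \<and> finite (CN_E N \<union> tri N ` v)" if "v \<in> CN_C N" for v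
      using psiC[OF N4 that] C_fin[OF CN_C_sub[OF that]] by simp
    have a_eq: "mmono (\<lambda>v. ?\<psi>P' (v \<inter> ?A)) m = mmono (\<lambda>v. ?\<psi>P' (v \<inter> ?A)) m'"
    proof (rule mono_transfer[OF _ G2 _ km km' eqm])
      fix v assume v: "v \<in> CN_C N"
      show "?\<psi>P' (v \<inter> ?A) = gmono (Pp_E n N \<union> tri N ` (v \<inter> ?A)) \<and> finite (Pp_E n N \<union> tri N ` (v \<inter> ?A))"
        using psiPp[OF n4 nN setS(1)[OF n4 nN v]] Pp_fin CN_C_sub[OF v] by blast
    next
      fix T show "(\<forall>v\<in>CN_C N. T \<notin> Pp_E n N \<union> tri N ` (v \<inter> ?A)) \<or>
         (\<exists>T2. \<forall>v\<in>CN_C N. (T \<in> Pp_E n N \<union> tri N ` (v \<inter> ?A)) = (T2 \<in> CN_E N \<union> tri N ` v))"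
        by (rule cond_restrict[OF N4 PpE_sub[OF n4 nN]]) (use n4 nN in auto)
    qed
    have b_eq: "mmono (\<lambda>v. ?\<psi>P (v \<inter> ?B)) m = mmono (\<lambda>v. ?\<psi>P (v \<inter> ?B)) m'"
    proof (rule mono_transfer[OF _ G2 _ km km' eqm])
      fix v assume v: "v \<in> CN_C N"
      show "?\<psi>P (v \<inter> ?B) = gmono (Pn_E n \<union> tri N ` (v \<inter> ?B)) \<and> finite (Pn_E n \<union> tri N ` (v \<inter> ?B))"
        using psiP[OF n4 nN setS(2)[OF n4 nN v]] Pn_fin CN_C_sub[OF v] by blast
    next
      fix T show "(\<forall>v\<in>CN_C N. T \<notin> Pn_E n \<union> tri N ` (v \<inter> ?B)) \<or>
         (\<exists>T2. \<forall>v\<in>CN_C N. (T \<in> Pn_E n \<union> tri N ` (v \<inter> ?B)) = (T2 \<in> CN_E N \<union> tri N ` v))"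
        by (rule cond_restrict[OF N4 PnE_sub[OF nN]]) (use n4 nN in auto)
    qed
    have polA: "mmono ?\<alpha> k \<in> polys_in (Pp_C n N)" if "Poly_Mapping.keys k \<subseteq> CN_C N" for k
      by (rule polys_in_mono[OF that]) (intro polys_in_mvar setS[OF n4 nN])
    have polB: "mmono ?\<beta> k \<in> polys_in (Pn_C n)" if "Poly_Mapping.keys k \<subseteq> CN_C N" for k
      by (rule polys_in_mono[OF that]) (intro polys_in_mvar setS[OF n4 nN])
    have aI: "mmono ?\<alpha> m - mmono ?\<alpha> m' \<in> ?I"
      unfolding IG_def using polys_in_diff[OF polA[OF km] polA[OF km']] a_eq
      by (simp add: msubst_diff msubst_mono)
    have bJ: "mmono ?\<beta> m - mmono ?\<beta> m' \<in> ?J"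
      unfolding IG_def using polys_in_diff[OF polB[OF km] polB[OF km']] b_eq
      by (simp add: msubst_diff msubst_mono)
    have chi: "mmono ?\<chi> k = msubst ?\<iota>1 (mmono ?\<alpha> k) * msubst ?\<iota>2 (mmono ?\<beta> k)" for k
      by (simp add: mono_mult_distrib msubst_mono)
    let ?a1 = "msubst ?\<iota>1 (mmono ?\<alpha> m)" let ?a2 = "msubst ?\<iota>1 (mmono ?\<alpha> m')"
    let ?b1 = "msubst ?\<iota>2 (mmono ?\<beta> m)" let ?b2 = "msubst ?\<iota>2 (mmono ?\<beta> m')"
    have g1: "msubst ?\<iota>1 (mmono ?\<alpha> m - mmono ?\<alpha> m') \<in> ?Id" using aI by (intro ideal_gen_base) blast
    have g2: "msubst ?\<iota>2 (mmono ?\<beta> m - mmono ?\<beta> m') \<in> ?Id" using bJ by (intro ideal_gen_base) blast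
    have "?a1 * ?b1 - ?a2 * ?b2 = ?a1 * (?b1 - ?b2) + ?b2 * (?a1 - ?a2)" by (simp add: algebra_simps)
    also have "\<dots> \<in> ?Id"
      using g1 g2 by (intro ideal_gen_add ideal_gen_mult) (simp_all add: msubst_diff)
    finally have "?a1 * ?b1 - ?a2 * ?b2 \<in> ?Id" .
    then have fin: "Poly_Mapping.single 0 c * (?a1 * ?b1 - ?a2 * ?b2) \<in> ?Id" by (rule ideal_gen_mult)
    have e1: "msubst ?\<chi> (Poly_Mapping.single 0 c * (Poly_Mapping.single m 1 - Poly_Mapping.single m' 1))
       = Poly_Mapping.single 0 c * (mmono ?\<chi> m - mmono ?\<chi> m')"
      by (simp only: msubst_mult msubst_diff msubst_single msubst_const single_one mult_1_left mono_zero mult_1_right)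
    show "msubst ?\<chi> (Poly_Mapping.single 0 c * (Poly_Mapping.single m 1 - Poly_Mapping.single m' 1)) \<in> ?Id"
      unfolding e1 chi by (rule fin)
  qed
  then show "x \<in> fiber_prod (Qmn n N) ?I ?J"
    unfolding fiber_prod_def using x_in phix by simp
qed

lemma dir2:
  assumes n4: "n \<ge> 4" and nN: "n \<le> N"
  shows "fiber_prod (Qmn n N) (IG (Pp_V n N) (Pp_E n N) (Pp_C n N)) (IG (Pn_V n) (Pn_E n) (Pn_C n))
    \<subseteq> msubst (\<lambda>S. mvar (S \<inter> ({n..N} \<union> {1}), S \<inter> {2..n-1}))
            ` (IG (CN_V N) (CN_E N) (CN_C N) :: (nat set, 'k::field) mpoly set)"
proof
  have N4: "N \<ge> 4" using n4 nN by simp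
  let ?A = "{n..N} \<union> {1::nat}"
  let ?B = "{2..n-1::nat}"
  let ?\<psi>C = "imset_mono (CN_V N) (CN_E N) :: nat set \<Rightarrow> (nat set, 'k) mpoly"
  let ?\<psi>P' = "imset_mono (Pp_V n N) (Pp_E n N) :: nat set \<Rightarrow> (nat set, 'k) mpoly"
  let ?\<psi>P = "imset_mono (Pn_V n) (Pn_E n) :: nat set \<Rightarrow> (nat set, 'k) mpoly"
  let ?I = "IG (Pp_V n N) (Pp_E n N) (Pp_C n N) :: (nat set, 'k) mpoly set"
  let ?J = "IG (Pn_V n) (Pn_E n) (Pn_C n) :: (nat set, 'k) mpoly set"
  let ?\<iota>1 = "\<lambda>a. mvar (Inl a) :: (nat set + nat set, 'k) mpoly"
  let ?\<iota>2 = "\<lambda>b. mvar (Inr b) :: (nat set + nat set, 'k) mpoly"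
  let ?Id = "ideal_gen (msubst ?\<iota>1 ` ?I \<union> msubst ?\<iota>2 ` ?J)"
  let ?\<phi> = "\<lambda>(a, b). mvar (Inl a) * mvar (Inr b) :: (nat set + nat set, 'k) mpoly"
  let ?back = "\<lambda>v. mvar (fst v \<union> snd v) :: (nat set, 'k) mpoly"
  let ?ren = "\<lambda>S. mvar (S \<inter> ?A, S \<inter> ?B) :: (nat set \<times> nat set, 'k) mpoly"
  define \<theta> :: "nat set + nat set \<Rightarrow> (nat set, 'k) mpoly"
    where "\<theta> = (\<lambda>v. case v of Inl a \<Rightarrow> gmono (CN_E N \<union> tri N ` a) | Inr b \<Rightarrow> gmono (tri N ` b))"
  fix p assume "p \<in> fiber_prod (Qmn n N) ?I ?J"
  then have pQ: "p \<in> polys_in (Qmn n N)" and pId: "msubst ?\<phi> p \<in> ?Id"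
    unfolding fiber_prod_def by auto
  have vQ: "v \<in> Qmn n N" if "m \<in> Poly_Mapping.keys p" "v \<in> Poly_Mapping.keys m" for m v
    using pQ that unfolding polys_in_def by blast
  define q where "q = msubst ?back p"
  have q_in: "q \<in> polys_in (CN_C N)"
    unfolding q_def
  proof (rule msubst_polys_in[OF pQ])
    fix v assume "v \<in> Qmn n N"
    then show "?back v \<in> polys_in (CN_C N)" using setQ(1)[OF n4 nN, of "fst v" "snd v"]
      by (intro polys_in_mvar) simp
  qed
  have ren_q: "msubst ?ren q = p"
  proof -
    have "msubst ?ren q = msubst (\<lambda>v. ?ren (fst v \<union> snd v)) p"
      unfolding q_def msubst_msubst by simp
    also have "\<dots> = msubst mvar p"
    proof (rule msubst_cong)
      fix m v assume "m \<in> Poly_Mapping.keys p" "v \<in> Poly_Mapping.keys m"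
      then have v: "v \<in> Qmn n N" by (rule vQ)
      obtain a b where ab: "v = (a, b)" by (cases v)
      show "?ren (fst v \<union> snd v) = mvar v"
        using setQ(2,3)[OF n4 nN v[unfolded ab]] ab by simp
    qed
    also have "\<dots> = p" by (rule msubst_mvar_id)
    finally show ?thesis .
  qed
  have C_fin: "finite (CN_E N \<union> tri N ` S)" if "S \<subseteq> {1..N}" for S
    using finite_CN_E finite_sub_N[OF that] by simp
  have Pp_fin: "finite (Pp_E n N \<union> tri N ` S)" if "S \<subseteq> {1..N}" for S
    using finite_subset[OF PpE_sub[OF n4 nN] finite_CN_E] finite_sub_N[OF that] by simp
  have Pn_fin: "finite (Pn_E n \<union> tri N ` S)" if "S \<subseteq> {1..N}" for S
    using finite_subset[OF PnE_sub[OF nN] finite_CN_E] finite_sub_N[OF that] by simp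
  have theta_phi: "msubst \<theta> (?\<phi> v) = ?\<psi>C (fst v \<union> snd v)" if v: "v \<in> Qmn n N" for v
  proof -
    obtain a b where ab: "v = (a, b)" by (cases v)
    have Q: "(a, b) \<in> Qmn n N" using v ab by simp
    have aN: "a \<subseteq> {1..N}" using Pp_C_sub[OF n4 nN setQ(5)[OF n4 nN Q]] .
    have bN: "b \<subseteq> {1..N}" using Pn_C_sub[OF n4 nN setQ(6)[OF n4 nN Q]] .
    have disj: "(CN_E N \<union> tri N ` a) \<inter> tri N ` b = {}"
    proof (intro equalityI subsetI)
      fix T assume T: "T \<in> (CN_E N \<union> tri N ` a) \<inter> tri N ` b"
      then obtain k where k: "k \<in> b" "T = tri N k" by blast
      have kN: "k \<in> {1..N}" using k bN by blast
      have "T \<notin> CN_E N" using tri_not_edge[OF N4 kN] k by simp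
      then obtain j where j: "j \<in> a" "T = tri N j" using T by blast
      have jN: "j \<in> {1..N}" using j aN by blast
      have "j = k" using tri_inj[OF N4 jN kN] j k by simp
      then show "T \<in> {}" using j k setQ(4)[OF n4 nN Q] by blast
    qed auto
    have "msubst \<theta> (?\<phi> v) = gmono (CN_E N \<union> tri N ` a) * gmono (tri N ` b)"
      unfolding ab by (simp add: msubst_mult \<theta>_def)
    also have "\<dots> = gmono (CN_E N \<union> tri N ` a \<union> tri N ` b)"
      by (rule gmono_union[symmetric]) (use C_fin[OF aN] finite_sub_N[OF bN] disj in auto)
    also have "\<dots> = ?\<psi>C (a \<union> b)"
    proof -
      have "?\<psi>C (a \<union> b) = gmono (CN_E N \<union> tri N ` (a \<union> b))" by (rule psiC[OF N4 setQ(1)[OF n4 nN Q]])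
      then show ?thesis by (simp add: image_Un Un_assoc)
    qed
    finally show ?thesis using ab by simp
  qed
  have "msubst ?\<psi>C q = msubst \<theta> (msubst ?\<phi> p)"
  proof -
    have "msubst ?\<psi>C q = msubst (\<lambda>v. ?\<psi>C (fst v \<union> snd v)) p"
      unfolding q_def msubst_msubst by simp
    also have "\<dots> = msubst (\<lambda>v. msubst \<theta> (?\<phi> v)) p"
      by (rule msubst_cong) (simp add: theta_phi vQ)
    also have "\<dots> = msubst \<theta> (msubst ?\<phi> p)" by (simp add: msubst_msubst)
    finally show ?thesis .
  qed
  also have "\<dots> = 0"
  proof (rule msubst_ideal_gen_zero[OF _ pId])
    fix g assume "g \<in> msubst ?\<iota>1 ` ?I \<union> msubst ?\<iota>2 ` ?J"
    then show "msubst \<theta> g = 0"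
    proof
      assume "g \<in> msubst ?\<iota>1 ` ?I"
      then obtain i where i: "i \<in> ?I" "g = msubst ?\<iota>1 i" by blast
      have iP: "i \<in> polys_in (Pp_C n N)" "msubst ?\<psi>P' i = 0" using i(1) unfolding IG_def by auto
      have "msubst \<theta> g = msubst (\<lambda>a. gmono (CN_E N \<union> tri N ` a)) i"
        unfolding i(2) msubst_msubst by (simp add: \<theta>_def)
      also have "\<dots> = 0"
      proof (rule kernel_transfer[OF _ _ iP])
        fix v assume "v \<in> Pp_C n N"
        then show "\<exists>e. ?\<psi>P' v = Poly_Mapping.single e 1"
          using psiPp[OF n4 nN] gmono_is_single by metis
      next
        fix m m' assume km: "Poly_Mapping.keys m \<subseteq> Pp_C n N" and km': "Poly_Mapping.keys m' \<subseteq> Pp_C n N"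
          and eq: "mmono ?\<psi>P' m = mmono ?\<psi>P' m'"
        show "mmono (\<lambda>a. gmono (CN_E N \<union> tri N ` a)) m = mmono (\<lambda>a. gmono (CN_E N \<union> tri N ` a) :: (nat set, 'k) mpoly) m'"
        proof (rule mono_transfer[OF _ _ _ km km' eq])
          fix v assume v: "v \<in> Pp_C n N"
          show "gmono (CN_E N \<union> tri N ` v) = gmono (CN_E N \<union> tri N ` v) \<and> finite (CN_E N \<union> tri N ` v)"
            using C_fin[OF Pp_C_sub[OF n4 nN v]] by simp
        next
          fix v assume v: "v \<in> Pp_C n N"
          show "?\<psi>P' v = gmono (Pp_E n N \<union> tri N ` v) \<and> finite (Pp_E n N \<union> tri N ` v)"
            using psiPp[OF n4 nN v] Pp_fin[OF Pp_C_sub[OF n4 nN v]] by simp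
        next
          fix T
          have "{1, 2} \<in> Pp_E n N" by (simp add: Pp_E_def)
          then show "(\<forall>v\<in>Pp_C n N. T \<notin> CN_E N \<union> tri N ` v) \<or>
             (\<exists>T2. \<forall>v\<in>Pp_C n N. (T \<in> CN_E N \<union> tri N ` v) = (T2 \<in> Pp_E n N \<union> tri N ` v))"
            by (rule cond_extend[OF PpE_sub[OF n4 nN]])
        qed
      qed
      finally show ?thesis .
    next
      assume "g \<in> msubst ?\<iota>2 ` ?J"
      then obtain j where j: "j \<in> ?J" "g = msubst ?\<iota>2 j" by blast
      have jP: "j \<in> polys_in (Pn_C n)" "msubst ?\<psi>P j = 0" using j(1) unfolding IG_def by auto
      have "msubst \<theta> g = msubst (\<lambda>b. gmono (tri N ` b)) j"
        unfolding j(2) msubst_msubst by (simp add: \<theta>_def)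
      also have "\<dots> = 0"
      proof (rule kernel_transfer[OF _ _ jP])
        fix v assume "v \<in> Pn_C n"
        then show "\<exists>e. ?\<psi>P v = Poly_Mapping.single e 1"
          using psiP[OF n4 nN] gmono_is_single by metis
      next
        fix m m' assume km: "Poly_Mapping.keys m \<subseteq> Pn_C n" and km': "Poly_Mapping.keys m' \<subseteq> Pn_C n"
          and eq: "mmono ?\<psi>P m = mmono ?\<psi>P m'"
        show "mmono (\<lambda>b. gmono (tri N ` b)) m = mmono (\<lambda>b. gmono (tri N ` b) :: (nat set, 'k) mpoly) m'"
        proof (rule mono_transfer[OF _ _ _ km km' eq])
          fix v assume v: "v \<in> Pn_C n"
          show "gmono (tri N ` v) = gmono (tri N ` v) \<and> finite (tri N ` v)"
            using finite_sub_N[OF Pn_C_sub[OF n4 nN v]] by simp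
        next
          fix v assume v: "v \<in> Pn_C n"
          show "?\<psi>P v = gmono (Pn_E n \<union> tri N ` v) \<and> finite (Pn_E n \<union> tri N ` v)"
            using psiP[OF n4 nN v] Pn_fin[OF Pn_C_sub[OF n4 nN v]] by simp
        next
          fix T
          show "(\<forall>v\<in>Pn_C n. T \<notin> tri N ` v) \<or>
             (\<exists>T2. \<forall>v\<in>Pn_C n. (T \<in> tri N ` v) = (T2 \<in> Pn_E n \<union> tri N ` v))"
            by (rule cond_drop[OF N4 PnE_sub[OF nN]]) (use Pn_C_sub[OF n4 nN] in blast)
        qed
      qed
      finally show ?thesis .
    qed
  qed
  finally have "msubst ?\<psi>C q = 0" .
  then have "q \<in> IG (CN_V N) (CN_E N) (CN_C N)" using q_in unfolding IG_def by simp
  then show "p \<in> msubst ?ren ` (IG (CN_V N) (CN_E N) (CN_C N) :: (nat set, 'k) mpoly set)"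
    using ren_q by (intro image_eqI[of p _ q]) simp_all
qed

theorem theorem5p1:
  fixes m n N :: nat
  assumes "m \<ge> 4" and "n \<ge> 4" and "N = n + m - 4"
  shows "msubst (\<lambda>S. mvar (S \<inter> ({n..N} \<union> {1}), S \<inter> {2..n-1}))
            ` (IG (CN_V N) (CN_E N) (CN_C N) :: (nat set, 'k::field) mpoly set)
         = fiber_prod (Qmn n N) (IG (Pp_V n N) (Pp_E n N) (Pp_C n N)) (IG (Pn_V n) (Pn_E n) (Pn_C n))"
proof -
  have n4: "n \<ge> 4" and nN: "n \<le> N" using assms by auto
  show ?thesis using dir1[OF n4 nN] dir2[OF n4 nN] by (rule equalityI)
qed

end
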